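(* Let $P$ be the transition matrix of a reversible and ergodic Markov chain on $V$ with stationary distribution $\pi$ and mixing rate $t^*$. For the quasi-random router model for $P$ with any initial configuration of $M$ tokens, $$\left|\chi^{(T)}_w-\mu^{(T)}_w\right|\le\frac{6\pi_w}{\pi_{\min}}\,\lg(M+1)\,t^*\,\Delta$$ for all $w\in V$ and $T\ge0$.
   Context: Let $V=\{1,\dots,N\}$ and let $P\in\mathbb{R}_{\ge 0}^{N\times N}$ be an ergodic (irreducible, aperiodic) stochastic matrix with stationary distribution $\pi$; $\pi_{\min}=\min_v\pi_v$; reversible means $\pi_uP_{u,v}=\pi_vP_{v,u}$ for all $u,v$. For $v\in V$ let $\mathcal N(v)=\{u: P_{v,u}>0\}$, $\delta(v)=|\mathcal N(v)|$, $\Delta=\max_v\delta(v)$; $\lg=\log_2$. Total variation distance $d_{TV}(\xi,\zeta)=\frac12\|\xi-\zeta\|_1$; mixing time $\tau(\varepsilon)=\max_{v}\min\{t\ge0: d_{TV}(P^t_{v,\cdot},\pi)\le\varepsilon\}$; mixing rate $t^*=\tau(1/4)$. The van der Corput function $\psi$: $\psi(0)=0$ and for $i=\sum_j\beta_j(i)2^j>0$ in binary, $\psi(i)=\sum_j\beta_j(i)2^{-(j+1)}$. The quasi-random router: fix an ordering $u_1,\dots,u_{\delta(v)}$ of $\mathcal N(v)$ and set $\sigma_v(i)=u_k$ where $\sum_{j=1}^{k-1}P_{v,u_j}\le\psi(i)<\sum_{j=1}^{k}P_{v,u_j}$. Write $I_{v,u}[z,z')=|\{j\in\{z,\dots,z'-1\}:\sigma_v(j)=u\}|$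 (zero if $z'\le z$). Given $\chi^{(0)}\in\mathbb{Z}_{\ge0}^N$ with $\sum_v\chi^{(0)}_v=M$, set $Z^{(t)}_{v,u}=I_{v,u}\big[\sum_{s=0}^{t-1}\chi^{(s)}_v,\sum_{s=0}^{t}\chi^{(s)}_v\big)$, $\chi^{(t+1)}_u=\sum_vZ^{(t)}_{v,u}$, $\mu^{(0)}=\chi^{(0)}$, $\mu^{(t)}=\mu^{(0)}P^t$. *)

theory Defs
  imports Complex_Main
begin

definition stochastic :: "('v::finite \<Rightarrow> 'v \<Rightarrow> real) \<Rightarrow> bool" where
  "stochastic P \<longleftrightarrow> (\<forall>u v. P u v \<ge> 0) \<and> (\<forall>u. (\<Sum>v\<in>UNIV. P u v) = 1)"

fun mpow :: "('v::finite \<Rightarrow> 'v \<Rightarrow> real) \<Rightarrow> nat \<Rightarrow> 'v \<Rightarrow> 'v \<Rightarrow> real" where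
  "mpow P 0 = (\<lambda>u v. if u = v then 1 else 0)"
| "mpow P (Suc t) = (\<lambda>u v. \<Sum>w\<in>UNIV. mpow P t u w * P w v)"

definition irreducible_chain :: "('v::finite \<Rightarrow> 'v \<Rightarrow> real) \<Rightarrow> bool" where
  "irreducible_chain P \<longleftrightarrow> (\<forall>u v. \<exists>t. mpow P t u v > 0)"

definition aperiodic_chain :: "('v::finite \<Rightarrow> 'v \<Rightarrow> real) \<Rightarrow> bool" where
  "aperiodic_chain P \<longleftrightarrow> (\<forall>v. Gcd {t. t > 0 \<and> mpow P t v v > 0} = 1)"

definition ergodic :: "('v::finite \<Rightarrow> 'v \<Rightarrow> real) \<Rightarrow> bool" where
  "ergodic P \<longleftrightarrow> stochastic P \<and> irreducible_chain P \<and> aperiodic_chain P"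

definition stationary :: "('v::finite \<Rightarrow> 'v \<Rightarrow> real) \<Rightarrow> ('v \<Rightarrow> real) \<Rightarrow> bool" where
  "stationary P \<pi> \<longleftrightarrow> (\<forall>v. \<pi> v \<ge> 0) \<and> (\<Sum>v\<in>UNIV. \<pi> v) = 1 \<and>
     (\<forall>v. (\<Sum>u\<in>UNIV. \<pi> u * P u v) = \<pi> v)"

definition reversible :: "('v::finite \<Rightarrow> 'v \<Rightarrow> real) \<Rightarrow> ('v \<Rightarrow> real) \<Rightarrow> bool" where
  "reversible P \<pi> \<longleftrightarrow> (\<forall>u v. \<pi> u * P u v = \<pi> v * P v u)"

definition pi_min :: "('v::finite \<Rightarrow> real) \<Rightarrow> real" where
  "pi_min \<pi> = Min (range \<pi>)"

definition nbhd :: "('v::finite \<Rightarrow> 'v \<Rightarrow> real) \<Rightarrow> 'v \<Rightarrow> 'v set" where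
  "nbhd P v = {u. P v u > 0}"

definition max_degree :: "('v::finite \<Rightarrow> 'v \<Rightarrow> real) \<Rightarrow> nat" where
  "max_degree P = Max (range (\<lambda>v. card (nbhd P v)))"

definition dTV :: "('v::finite \<Rightarrow> real) \<Rightarrow> ('v \<Rightarrow> real) \<Rightarrow> real" where
  "dTV \<xi> \<zeta> = (1/2) * (\<Sum>u\<in>UNIV. \<bar>\<xi> u - \<zeta> u\<bar>)"

definition mixing_time :: "('v::finite \<Rightarrow> 'v \<Rightarrow> real) \<Rightarrow> ('v \<Rightarrow> real) \<Rightarrow> real \<Rightarrow> nat" where
  "mixing_time P \<pi> \<epsilon> = Max (range (\<lambda>v. LEAST t. dTV (mpow P t v) \<pi> \<le> \<epsilon>))"

definition mixing_rate :: "('v::finite \<Rightarrow> 'v \<Rightarrow> real) \<Rightarrow> ('v \<Rightarrow> real) \<Rightarrow> nat" where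
  "mixing_rate P \<pi> = mixing_time P \<pi> (1/4)"

(* van der Corput function: psi(sum_j beta_j 2^j) = sum_j beta_j 2^-(j+1); bits j >= i vanish *)
definition vdc :: "nat \<Rightarrow> real" where
  "vdc i = (\<Sum>j<i. real ((i div 2 ^ j) mod 2) / 2 ^ (j + 1))"

(* quasi-random router at v, with the ordering ord v = [u_1, ..., u_delta(v)] of N(v);
   sigma_v(i) = u_k with sum_{j<k} P v u_j <= psi(i) < sum_{j<=k} P v u_j (0-based k here) *)
definition router :: "('v::finite \<Rightarrow> 'v \<Rightarrow> real) \<Rightarrow> ('v \<Rightarrow> 'v list) \<Rightarrow> 'v \<Rightarrow> nat \<Rightarrow> 'v" where
  "router P ord v i = (THE u. \<exists>k < length (ord v). u = ord v ! k \<and>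
      (\<Sum>x\<leftarrow>take k (ord v). P v x) \<le> vdc i \<and> vdc i < (\<Sum>x\<leftarrow>take (Suc k) (ord v). P v x))"

definition Icount :: "('v::finite \<Rightarrow> 'v \<Rightarrow> real) \<Rightarrow> ('v \<Rightarrow> 'v list) \<Rightarrow> 'v \<Rightarrow> 'v \<Rightarrow> nat \<Rightarrow> nat \<Rightarrow> nat" where
  "Icount P ord v u z z' = card {j \<in> {z..<z'}. router P ord v j = u}"

(* state at time t: (chi^(t), cumulative sums  C_t v = sum_{s<t} chi^(s)_v) *)
fun qr_state :: "('v::finite \<Rightarrow> 'v \<Rightarrow> real) \<Rightarrow> ('v \<Rightarrow> 'v list) \<Rightarrow> ('v \<Rightarrow> nat) \<Rightarrow> nat
    \<Rightarrow> ('v \<Rightarrow> nat) \<times> ('v \<Rightarrow> nat)" where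
  "qr_state P ord chi0 0 = (chi0, (\<lambda>v. 0))"
| "qr_state P ord chi0 (Suc t) =
     (let (c, C) = qr_state P ord chi0 t; C' = (\<lambda>v. C v + c v)
      in ((\<lambda>u. \<Sum>v\<in>UNIV. Icount P ord v u (C v) (C' v)), C'))"

definition qr_chi :: "('v::finite \<Rightarrow> 'v \<Rightarrow> real) \<Rightarrow> ('v \<Rightarrow> 'v list) \<Rightarrow> ('v \<Rightarrow> nat) \<Rightarrow> nat \<Rightarrow> 'v \<Rightarrow> nat" where
  "qr_chi P ord chi0 t = fst (qr_state P ord chi0 t)"

definition qr_mu :: "('v::finite \<Rightarrow> 'v \<Rightarrow> real) \<Rightarrow> ('v \<Rightarrow> nat) \<Rightarrow> nat \<Rightarrow> 'v \<Rightarrow> real" where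
  "qr_mu P chi0 t w = (\<Sum>v\<in>UNIV. real (chi0 v) * mpow P t v w)"

end

theory Submission
  imports Defs
begin


lemma mpow_nonneg:
  assumes "stochastic P" shows "mpow P t u v \<ge> 0"
  using assms
  by (induction t arbitrary: v) (auto simp: stochastic_def intro!: sum_nonneg mult_nonneg_nonneg)

lemma mpow_rowsum:
  assumes "stochastic P" shows "(\<Sum>v\<in>UNIV. mpow P t u v) = 1"
proof (induction t)
  case 0 then show ?case by simp
next
  case (Suc t)
  have "(\<Sum>v\<in>UNIV. mpow P (Suc t) u v) = (\<Sum>w\<in>UNIV. mpow P t u w * (\<Sum>v\<in>UNIV. P w v))"
    by (simp add: sum_distrib_left) (rule sum.swap)
  also have "\<dots> = 1" using assms Suc by (simp add: stochastic_def)
  finally show ?case .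
qed

lemma mpow_add: "mpow P (s + t) u v = (\<Sum>w\<in>UNIV. mpow P s u w * mpow P t w v)"
proof (induction t arbitrary: v)
  case 0 then show ?case by (simp add: if_distrib cong: if_cong)
next
  case (Suc t)
  have "mpow P (s + Suc t) u v = (\<Sum>x\<in>UNIV. mpow P (s+t) u x * P x v)" by simp
  also have "\<dots> = (\<Sum>x\<in>UNIV. (\<Sum>w\<in>UNIV. mpow P s u w * mpow P t w x) * P x v)"
    using Suc by simp
  also have "\<dots> = (\<Sum>w\<in>UNIV. mpow P s u w * (\<Sum>x\<in>UNIV. mpow P t w x * P x v))"
    by (simp add: sum_distrib_left sum_distrib_right mult.assoc) (rule sum.swap)
  finally show ?case by simp
qed

lemma mpow_one: "mpow P 1 u v = P u v"
proof -
  have "mpow P 1 u v = (\<Sum>w\<in>UNIV. (if u = w then 1 else 0) * P w v)" by simp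
  also have "\<dots> = (\<Sum>w\<in>UNIV. (if u = w then P w v else 0))" by (rule sum.cong) auto
  also have "\<dots> = P u v" by simp
  finally show ?thesis .
qed

lemma mpow_Suc_left: "mpow P (Suc t) u v = (\<Sum>w\<in>UNIV. P u w * mpow P t w v)"
  using mpow_add[of P 1 t u v] by (simp only: mpow_one) simp

lemma mpow_ge:
  assumes "stochastic P"
  shows "mpow P (s + t) u v \<ge> mpow P s u w * mpow P t w v"
proof -
  have "mpow P s u w * mpow P t w v \<le> (\<Sum>x\<in>UNIV. mpow P s u x * mpow P t x v)"
    by (rule member_le_sum) (auto intro!: mult_nonneg_nonneg mpow_nonneg assms)
  then show ?thesis by (simp add: mpow_add)
qed

lemma stationary_pow:
  assumes "stationary P \<pi>" shows "(\<Sum>u\<in>UNIV. \<pi> u * mpow P t u v) = \<pi> v"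
proof (induction t arbitrary: v)
  case 0 then show ?case by (simp add: if_distrib cong: if_cong)
next
  case (Suc t)
  have "(\<Sum>u\<in>UNIV. \<pi> u * mpow P (Suc t) u v) = (\<Sum>w\<in>UNIV. (\<Sum>u\<in>UNIV. \<pi> u * mpow P t u w) * P w v)"
    by (simp add: sum_distrib_left sum_distrib_right mult.assoc) (rule sum.swap)
  also have "\<dots> = \<pi> v" using Suc assms by (simp add: stationary_def)
  finally show ?case .
qed

lemma reversible_pow:
  assumes "reversible P \<pi>" shows "\<pi> u * mpow P t u v = \<pi> v * mpow P t v u"
proof (induction t arbitrary: v)
  case 0 then show ?case by simp
next
  case (Suc t)
  have "\<pi> u * mpow P (Suc t) u v = (\<Sum>x\<in>UNIV. (\<pi> u * mpow P t u x) * P x v)"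
    by (simp add: sum_distrib_left mult.assoc)
  also have "\<dots> = (\<Sum>x\<in>UNIV. mpow P t x u * (\<pi> x * P x v))"
    using Suc by (simp add: mult.commute mult.left_commute)
  also have "\<dots> = (\<Sum>x\<in>UNIV. mpow P t x u * (\<pi> v * P v x))"
    using assms by (simp add: reversible_def)
  also have "\<dots> = \<pi> v * (\<Sum>x\<in>UNIV. P v x * mpow P t x u)"
    by (simp add: sum_distrib_left mult.commute mult.left_commute)
  also have "\<dots> = \<pi> v * mpow P (Suc t) v u" by (simp only: mpow_Suc_left)
  finally show ?case .
qed

lemma pi_pos:
  assumes "ergodic P" "stationary P \<pi>" shows "\<pi> v > 0"
proof -
  have "(\<Sum>u\<in>UNIV. \<pi> u) = 1" using assms by (simp add: stationary_def)
  then obtain u where u: "\<pi> u > 0"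
  proof -
    assume h: "\<And>u. \<pi> u > 0 \<Longrightarrow> thesis"
    show thesis
    proof (rule ccontr)
      assume "\<not> thesis"
      then have "\<forall>u. \<pi> u \<le> 0" using h by (meson not_less)
      then have "(\<Sum>u\<in>UNIV. \<pi> u) \<le> 0" by (simp add: sum_nonpos)
      with \<open>(\<Sum>u\<in>UNIV. \<pi> u) = 1\<close> show False by simp
    qed
  qed
  obtain t where t: "mpow P t u v > 0"
    using assms(1) by (auto simp: ergodic_def irreducible_chain_def)
  have st: "stochastic P" using assms(1) by (simp add: ergodic_def)
  have "\<pi> u * mpow P t u v \<le> (\<Sum>x\<in>UNIV. \<pi> x * mpow P t x v)"
    by (rule member_le_sum)
      (use assms(2) st in \<open>auto intro!: mult_nonneg_nonneg mpow_nonneg simp: stationary_def\<close>)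
  then have "\<pi> u * mpow P t u v \<le> \<pi> v" using stationary_pow[OF assms(2)] by simp
  moreover have "\<pi> u * mpow P t u v > 0" using u t by simp
  ultimately show ?thesis by linarith
qed



lemma vdc_ext:
  assumes "i \<le> L"
  shows "vdc i = (\<Sum>j<L. real ((i div 2 ^ j) mod 2) / 2 ^ (j + 1))"
proof -
  have z: "(i div 2 ^ j) = 0" if "j \<ge> i" for j
  proof -
    have "i < 2 ^ i" by (rule less_exp)
    also have "\<dots> \<le> 2 ^ j" using that by simp
    finally show ?thesis by simp
  qed
  have u: "{..<L} = {..<i} \<union> {i..<L}" using assms by auto
  have "(\<Sum>j<L. real ((i div 2 ^ j) mod 2) / 2 ^ (j + 1)) =
      (\<Sum>j\<in>{..<i} \<union> {i..<L}. real ((i div 2 ^ j) mod 2) / 2 ^ (j + 1))"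
    by (simp only: u)
  also have "\<dots> = (\<Sum>j<i. real ((i div 2 ^ j) mod 2) / 2 ^ (j + 1)) + (\<Sum>j\<in>{i..<L}. real ((i div 2 ^ j) mod 2) / 2 ^ (j + 1))"
    by (rule sum.union_disjoint) auto
  also have "(\<Sum>j\<in>{i..<L}. real ((i div 2 ^ j) mod 2) / 2 ^ (j + 1)) = 0"
    by (rule sum.neutral) (auto simp: z)
  finally show ?thesis by (simp add: vdc_def)
qed

lemma vdc_nonneg: "vdc i \<ge> 0"
  by (auto simp: vdc_def intro!: sum_nonneg)

lemma vdc_lt1: "vdc i < 1"
proof -
  have "vdc i \<le> (\<Sum>j<i. (1/2) ^ (j + 1))"
    unfolding vdc_def
    by (rule sum_mono) (auto simp: power_one_over divide_le_cancel)
  also have "\<dots> = (1/2) * (\<Sum>j<i. (1/2) ^ j)" by (simp add: sum_distrib_left)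
  also have "\<dots> = 1 - (1/2)^i" by (induction i) auto
  also have "\<dots> < 1" by simp
  finally show ?thesis .
qed

lemma vdc_even: "vdc (2 * k) = vdc k / 2"
proof -
  have "vdc (2*k) = (\<Sum>j<Suc (2*k). real ((2*k div 2 ^ j) mod 2) / 2 ^ (j + 1))"
    by (rule vdc_ext) simp
  also have "\<dots> = (\<Sum>j<2*k. real ((2*k div 2 ^ Suc j) mod 2) / 2 ^ (Suc j + 1))"
    by (subst sum.lessThan_Suc_shift) simp
  also have "\<dots> = (\<Sum>j<2*k. real ((k div 2 ^ j) mod 2) / 2 ^ (j + 1)) / 2"
    by (simp add: sum_divide_distrib div_mult2_eq)
  also have "\<dots> = vdc k / 2" by (subst vdc_ext[of k "2*k"]) auto
  finally show ?thesis .
qed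

lemma vdc_odd: "vdc (2 * k + 1) = 1/2 + vdc k / 2"
proof -
  have "vdc (2*k+1) = (\<Sum>j<Suc (2*k+1). real (((2*k+1) div 2 ^ j) mod 2) / 2 ^ (j + 1))"
    by (rule vdc_ext) simp
  also have "\<dots> = 1/2 + (\<Sum>j<2*k+1. real (((2*k+1) div 2 ^ Suc j) mod 2) / 2 ^ (Suc j + 1))"
    by (subst sum.lessThan_Suc_shift) simp
  also have "(\<Sum>j<2*k+1. real (((2*k+1) div 2 ^ Suc j) mod 2) / 2 ^ (Suc j + 1))
      = (\<Sum>j<2*k+1. real ((k div 2 ^ j) mod 2) / 2 ^ (j + 1)) / 2"
  proof -
    have "(\<Sum>j<2*k+1. real (((2*k+1) div 2 ^ Suc j) mod 2) / 2 ^ (Suc j + 1))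
       = (\<Sum>j<2*k+1. real ((k div 2 ^ j) mod 2) / 2 ^ (j + 1) / 2)"
    proof (rule sum.cong)
      fix j
      have "((2*k+1) div 2 ^ Suc j) = k div 2 ^ j"
        by (simp add: div_mult2_eq)
      then show "real (((2*k+1) div 2 ^ Suc j) mod 2) / 2 ^ (Suc j + 1) = real ((k div 2 ^ j) mod 2) / 2 ^ (j + 1) / 2"
        by simp
    qed simp
    also have "\<dots> = (\<Sum>j<2*k+1. real ((k div 2 ^ j) mod 2) / 2 ^ (j + 1)) / 2"
      by (rule sum_divide_distrib[symmetric])
    finally show ?thesis .
  qed
  also have "\<dots> = vdc k / 2" by (subst vdc_ext[of k "2*k+1"]) auto
  finally show ?thesis .
qed

lemma vdc_odd': "vdc (Suc (2 * k)) = 1/2 + vdc k / 2"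
  using vdc_odd[of k] by simp

definition cnt :: "nat \<Rightarrow> nat \<Rightarrow> real \<Rightarrow> nat" where
  "cnt z n x = card {j \<in> {z..<z+n}. vdc j < x}"

definition Ed :: "nat \<Rightarrow> nat \<Rightarrow> real \<Rightarrow> real" where
  "Ed z n x = real (cnt z n x) - real n * x"

definition ze :: "nat \<Rightarrow> nat" where "ze z = (z+1) div 2"
definition ne :: "nat \<Rightarrow> nat \<Rightarrow> nat" where "ne z n = (z+n+1) div 2 - (z+1) div 2"
definition zo :: "nat \<Rightarrow> nat" where "zo z = z div 2"
definition no :: "nat \<Rightarrow> nat \<Rightarrow> nat" where "no z n = (z+n) div 2 - z div 2"

lemma ne_no_cases:
  obtains a b where "z = 2*a" "n = 2*b" "ne z n = b" "no z n = b"
  | a b where "z = 2*a" "n = 2*b+1" "ne z n = b+1" "no z n = b"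
  | a b where "z = 2*a+1" "n = 2*b" "ne z n = b" "no z n = b"
  | a b where "z = 2*a+1" "n = 2*b+1" "ne z n = b" "no z n = b+1"
proof -
  obtain a where za: "z = 2*a \<or> z = 2*a+1" by (metis oddE evenE)
  obtain b where nb: "n = 2*b \<or> n = 2*b+1" by (metis oddE evenE)
  from za nb show thesis
  proof (elim disjE)
    assume "z = 2*a" "n = 2*b" then show thesis using that(1)[of a b] by (simp add: ne_def no_def)
  next
    assume h: "z = 2*a" "n = 2*b+1"
    have "(2*a+(2*b+1)+1) div 2 = a+b+1" by simp
    then show thesis using h that(2)[of a b] by (simp add: ne_def no_def)
  next
    assume h: "z = 2*a+1" "n = 2*b"
    have "(2*a+1+2*b+1) div 2 = a+b+1" by simp
    moreover have "(2*a+1+2*b) div 2 = a+b" by simp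
    ultimately show thesis using h that(3)[of a b] by (simp add: ne_def no_def)
  next
    assume h: "z = 2*a+1" "n = 2*b+1"
    have "(2*a+1+(2*b+1)+1) div 2 = a+b+1" by simp
    moreover have "(2*a+1+(2*b+1)) div 2 = a+b+1" by simp
    ultimately show thesis using h that(4)[of a b] by (simp add: ne_def no_def)
  qed
qed

lemma ne_no_sum: "ne z n + no z n = n"
  by (cases z n rule: ne_no_cases) auto

lemma cnt_split: "cnt z n x = card {k \<in> {ze z..<ze z + ne z n}. vdc (2*k) < x}
     + card {k \<in> {zo z..<zo z + no z n}. vdc (2*k+1) < x}"
proof -
  let ?A = "{k \<in> {ze z..<ze z + ne z n}. vdc (2*k) < x}"
  let ?B = "{k \<in> {zo z..<zo z + no z n}. vdc (2*k+1) < x}"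
  have e: "\<And>k. (k \<in> {ze z..<ze z + ne z n}) = (2*k \<in> {z..<z+n})"
    by (cases z n rule: ne_no_cases) (auto simp: ze_def)
  have o: "\<And>k. (k \<in> {zo z..<zo z + no z n}) = (2*k+1 \<in> {z..<z+n})"
    by (cases z n rule: ne_no_cases) (auto simp: zo_def)
  have "{j \<in> {z..<z+n}. vdc j < x} = (\<lambda>k. 2*k) ` ?A \<union> (\<lambda>k. 2*k+1) ` ?B"
  proof (rule set_eqI, rule iffI)
    fix j assume j: "j \<in> {j \<in> {z..<z+n}. vdc j < x}"
    show "j \<in> (\<lambda>k. 2*k) ` ?A \<union> (\<lambda>k. 2*k+1) ` ?B"
    proof (cases "even j")
      case True
      then obtain k where "j = 2*k" by auto
      then show ?thesis using j e[of k] by auto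
    next
      case False
      then obtain k where "j = 2*k+1" using oddE by blast
      then show ?thesis using j o[of k] by auto
    qed
  next
    fix j assume "j \<in> (\<lambda>k. 2*k) ` ?A \<union> (\<lambda>k. 2*k+1) ` ?B"
    then show "j \<in> {j \<in> {z..<z+n}. vdc j < x}" using e o by auto
  qed
  moreover have "(\<lambda>k. 2*k) ` ?A \<inter> (\<lambda>k. 2*k+1) ` ?B = {}" by auto arith
  moreover have "card ((\<lambda>k. 2*k) ` ?A) = card ?A" by (rule card_image) (auto simp: inj_on_def)
  moreover have "card ((\<lambda>k. 2*k+1) ` ?B) = card ?B" by (rule card_image) (auto simp: inj_on_def)
  ultimately show ?thesis unfolding cnt_def by (simp add: card_Un_disjoint)
qed

lemma Ed_low:
  assumes "0 \<le> x" "x \<le> 1/2"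
  shows "Ed z n x = Ed (ze z) (ne z n) (2*x) + (real (ne z n) - real (no z n)) * x"
proof -
  have A: "{k \<in> {ze z..<ze z + ne z n}. vdc (2*k) < x} = {k \<in> {ze z..<ze z + ne z n}. vdc k < 2*x}"
    by (auto simp: vdc_even)
  have B: "{k \<in> {zo z..<zo z + no z n}. vdc (2*k+1) < x} = {}"
  proof -
    have "\<not> vdc (2*k+1) < x" for k using assms vdc_nonneg[of k] by (simp add: vdc_odd')
    then show ?thesis by auto
  qed
  have "cnt z n x = cnt (ze z) (ne z n) (2*x)"
    unfolding cnt_split[of z n x] A B by (simp add: cnt_def)
  moreover have "real n = real (ne z n) + real (no z n)"
    using ne_no_sum[of z n] by (metis of_nat_add)
  ultimately show ?thesis unfolding Ed_def by (simp add: algebra_simps)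
qed

lemma Ed_high:
  assumes "1/2 \<le> x" "x \<le> 1"
  shows "Ed z n x = Ed (zo z) (no z n) (2*x-1) + (real (ne z n) - real (no z n)) * (1 - x)"
proof -
  have A: "{k \<in> {ze z..<ze z + ne z n}. vdc (2*k) < x} = {ze z..<ze z + ne z n}"
  proof -
    have "vdc (2*k) < x" for k using assms vdc_lt1[of k] by (simp add: vdc_even)
    then show ?thesis by auto
  qed
  have B: "{k \<in> {zo z..<zo z + no z n}. vdc (2*k+1) < x} = {k \<in> {zo z..<zo z + no z n}. vdc k < 2*x-1}"
    by (auto simp: vdc_odd')
  have "cnt z n x = ne z n + cnt (zo z) (no z n) (2*x-1)"
    unfolding cnt_split[of z n x] A B by (simp add: cnt_def)
  moreover have "real n = real (ne z n) + real (no z n)"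
    using ne_no_sum[of z n] by (metis of_nat_add)
  ultimately show ?thesis unfolding Ed_def by (simp add: algebra_simps)
qed



lemma Ed_0: "Ed z 0 x = 0"
  by (simp add: Ed_def cnt_def)

lemma cnt_1: "cnt z 1 x = (if vdc z < x then 1 else 0)"
proof -
  have "{j \<in> {z..<z+1}. vdc j < x} = (if vdc z < x then {z} else {})" by auto
  then show ?thesis by (simp add: cnt_def)
qed

lemma Ed_1_abs: "0 \<le> x \<Longrightarrow> x \<le> 1 \<Longrightarrow> \<bar>Ed z 1 x\<bar> \<le> 1"
  unfolding Ed_def cnt_1 by auto

lemma Ed_1_diff: "0 \<le> x \<Longrightarrow> x \<le> 1 \<Longrightarrow> 0 \<le> y \<Longrightarrow> y \<le> 1 \<Longrightarrow> Ed z 1 x - Ed z 1 y \<le> 1"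
  unfolding Ed_def cnt_1 using vdc_nonneg[of z] by auto

lemma eps_abs: "\<bar>real (ne z n) - real (no z n)\<bar> \<le> 1"
  by (cases z n rule: ne_no_cases) auto

lemma eps_even: "even n \<Longrightarrow> real (ne z n) - real (no z n) = 0"
  by (cases z n rule: ne_no_cases) auto

lemma eps_odd: "odd n \<Longrightarrow> \<bar>real (ne z n) - real (no z n)\<bar> = 1"
  by (cases z n rule: ne_no_cases) auto

lemma halves_le: "ne z n \<le> n div 2 + 1" "no z n \<le> n div 2 + 1"
  by (cases z n rule: ne_no_cases; simp)+

lemma halves_le2: "ne z n \<le> (n+1) div 2" "no z n \<le> (n+1) div 2"
  by (cases z n rule: ne_no_cases; simp)+

lemma halves_even: "even n \<Longrightarrow> ne z n = n div 2" "even n \<Longrightarrow> no z n = n div 2"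
  by (cases z n rule: ne_no_cases; simp)+

lemma eps_mul: assumes "\<bar>x\<bar> \<le> 1/2" shows "\<bar>(e::real) * x\<bar> \<le> \<bar>e\<bar> / 2"
proof -
  have "\<bar>e\<bar> * \<bar>x\<bar> \<le> \<bar>e\<bar> * (1/2)" by (rule mult_left_mono) (use assms in auto)
  then show ?thesis by (simp add: abs_mult)
qed

lemma tri_helper: "\<bar>a\<bar> \<le> A \<Longrightarrow> \<bar>b\<bar> \<le> B \<Longrightarrow> \<bar>(a::real) + b\<bar> \<le> A + B"
  by (smt (verit) abs_triangle_ineq)

lemma fb:
  assumes "n \<le> 2^k + 1" "0 \<le> x" "x \<le> 1"
  shows "\<bar>Ed z n x\<bar> \<le> 1 + real k / 2"
  using assms
proof (induction n arbitrary: z x k rule: less_induct)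
  case (less n)
  show ?case
  proof (cases "n \<le> 1")
    case True
    then consider "n = 0" | "n = 1" by linarith
    then show ?thesis
    proof cases
      case 1 then show ?thesis by (simp add: Ed_0)
    next
      case 2 then show ?thesis using Ed_1_abs[of x z] less.prems by simp
    qed
  next
    case False
    let ?e = "real (ne z n) - real (no z n)"
    have lt: "ne z n < n" "no z n < n" using halves_le2[of z n] False by linarith+
    show ?thesis
    proof (cases "even n")
      case True
      have ne: "ne z n \<le> 2^k + 1" "no z n \<le> 2^k+1"
        using halves_even[OF True, of z] less.prems(1) by auto
      show ?thesis
      proof (cases "x \<le> 1/2")
        case True
        then show ?thesis using Ed_low[of x z n] less.IH[OF lt(1) ne(1), of "2*x" "ze z"]
          less.prems eps_even[OF \<open>even n\<close>, of z] by simp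
      next
        case False
        then show ?thesis using Ed_high[of x z n] less.IH[OF lt(2) ne(2), of "2*x-1" "zo z"]
          less.prems eps_even[OF \<open>even n\<close>, of z] by simp
      qed
    next
      case odd: False
      have "k \<noteq> 0"
      proof
        assume "k = 0"
        then have "n = 2" using less.prems(1) \<open>\<not> n \<le> 1\<close> by simp
        then show False using odd by simp
      qed
      then obtain k' where k: "k = Suc k'" by (cases k) auto
      have "n div 2 \<le> 2^k'"
      proof -
        have "n \<le> 2 * 2^k' + 1" using less.prems(1) k by simp
        then show ?thesis by linarith
      qed
      then have ne: "ne z n \<le> 2^k' + 1" "no z n \<le> 2^k'+1" using halves_le[of z n] by linarith+
      have e1: "\<bar>?e\<bar> = 1" using eps_odd[OF odd] .
      show ?thesis
      proof (cases "x \<le> 1/2")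
        case True
        have h: "\<bar>Ed (ze z) (ne z n) (2*x)\<bar> \<le> 1 + real k' / 2"
          using less.IH[OF lt(1) ne(1), of "2*x" "ze z"] less.prems True by simp
        have "\<bar>?e * x\<bar> \<le> \<bar>?e\<bar> / 2" by (rule eps_mul) (use True less.prems in auto)
        moreover have eq: "Ed z n x = Ed (ze z) (ne z n) (2*x) + ?e * x" using Ed_low[of x z n] True less.prems by simp
        moreover have "real k = real k' + 1" using k by simp
        ultimately show ?thesis unfolding eq using tri_helper[OF h \<open>\<bar>?e * x\<bar> \<le> \<bar>?e\<bar> / 2\<close>] e1 by (simp add: add_divide_distrib)
      next
        case False
        have h: "\<bar>Ed (zo z) (no z n) (2*x-1)\<bar> \<le> 1 + real k' / 2"
          using less.IH[OF lt(2) ne(2), of "2*x-1" "zo z"] less.prems False by simp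
        have "\<bar>?e * (1-x)\<bar> \<le> \<bar>?e\<bar> / 2" by (rule eps_mul) (use False less.prems in auto)
        moreover have eq: "Ed z n x = Ed (zo z) (no z n) (2*x-1) + ?e * (1-x)" using Ed_high[of x z n] False less.prems by simp
        moreover have "real k = real k' + 1" using k by simp
        ultimately show ?thesis unfolding eq using tri_helper[OF h \<open>\<bar>?e * (1-x)\<bar> \<le> \<bar>?e\<bar> / 2\<close>] e1 by (simp add: add_divide_distrib)
      qed
    qed
  qed
qed

lemma fb_even:
  assumes "j \<le> 2^k + 1" "0 \<le> x" "x \<le> 1"
  shows "\<bar>Ed z (2*j) x\<bar> \<le> 1 + real k / 2"
proof -
  have ev: "even (2*j)" by simp
  have ne: "ne z (2*j) = j" "no z (2*j) = j" using halves_even[OF ev, of z] by auto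
  show ?thesis
  proof (cases "x \<le> 1/2")
    case True
    then show ?thesis using Ed_low[of x z "2*j"] fb[OF assms(1), of "2*x" "ze z"]
      assms eps_even[OF ev, of z] ne by simp
  next
    case False
    then show ?thesis using Ed_high[of x z "2*j"] fb[OF assms(1), of "2*x-1" "zo z"]
      assms eps_even[OF ev, of z] ne by simp
  qed
qed



lemma pow_ineq:
  assumes "2^k + 4 \<le> (L::real)"
  shows "(2::real)^(2*k+4) \<le> L^3"
proof -
  define a :: real where "a = 2^k"
  have a0: "a \<ge> 0" by (simp add: a_def)
  have "(2::real)^(2*k+4) = 16 * a^2" by (simp add: a_def power_add power_mult[symmetric] mult.commute)
  also have "\<dots> \<le> (a+4)^3"
  proof -
    have "(a+4)^3 - 16*a^2 = a*((a-2)^2+44) + 64" by (simp add: power2_eq_square power3_eq_cube algebra_simps)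
    moreover have "a*((a-2)^2+44) \<ge> 0" using a0 by simp
    ultimately show ?thesis by linarith
  qed
  also have "\<dots> \<le> L^3" by (rule power_mono) (use assms a0 in \<open>auto simp: a_def\<close>)
  finally show ?thesis .
qed

lemma log_ineq1:
  assumes "(2::real)^(2*k+4) \<le> L^3" "L > 0"
  shows "2 + real k \<le> 3/2 * log 2 L"
proof -
  have "log 2 ((2::real)^(2*k+4)) \<le> log 2 (L^3)"
    using assms by (subst log_le_cancel_iff) auto
  moreover have "log 2 ((2::real)^(2*k+4)) = real (2*k+4)" by (simp add: log_nat_power)
  moreover have "log 2 (L^3) = 3 * log 2 L" using assms(2) by (simp add: log_nat_power)
  ultimately show ?thesis by simp
qed

lemma log_half_step:
  assumes "m \<ge> 1"
  shows "3/2 * log 2 (real m + 2) + 1/2 \<le> 3/2 * log 2 (2 * real m + 2)"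
proof -
  have m: "real m \<ge> 1" using assms by simp
  have "2 * (real m + 2)^3 \<le> (2 * real m + 2)^3"
  proof -
    have "(2 * real m + 2)^3 - 2 * (real m + 2)^3 = 6 * real m^3 + 12 * real m^2 - 8"
      by (simp add: power2_eq_square power3_eq_cube algebra_simps)
    moreover have "real m^3 \<ge> 1" "real m^2 \<ge> 1" using m by (simp_all add: one_le_power)
    ultimately show ?thesis by linarith
  qed
  then have "log 2 (2 * (real m + 2)^3) \<le> log 2 ((2 * real m + 2)^3)"
    using m by (subst log_le_cancel_iff) auto
  moreover have "log 2 (2 * (real m + 2)^3) = 1 + 3 * log 2 (real m + 2)"
    using m by (simp add: log_mult log_nat_power)
  moreover have "log 2 ((2 * real m + 2)^3) = 3 * log 2 (2 * real m + 2)"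
    using m by (simp add: log_nat_power)
  ultimately show ?thesis by simp
qed

lemma exists_k:
  assumes "q \<ge> (2::nat)"
  shows "\<exists>k'. q \<le> 2^(Suc k') \<and> 2^k' < q"
proof -
  define k where "k = (LEAST k. q \<le> 2^k)"
  have ex: "q \<le> 2^q" using less_exp[of q] by simp
  have qk: "q \<le> 2^k" unfolding k_def by (rule LeastI[of _ q]) (rule ex)
  have "k \<noteq> 0"
  proof
    assume "k = 0" then show False using qk assms by simp
  qed
  then obtain k' where k: "k = Suc k'" by (cases k) auto
  have "\<not> q \<le> 2^k'" using not_less_Least[of k' "\<lambda>k. q \<le> 2^k"] k unfolding k_def by simp
  then show ?thesis using qk k by auto
qed

lemma split_bound:
  fixes z n :: nat and R :: real
  defines "e \<equiv> real (ne z n) - real (no z n)"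
  assumes x: "0 \<le> x" "x \<le> 1" and y: "0 \<le> y" "y \<le> 1"
    and hWe: "\<And>a b. 0 \<le> a \<Longrightarrow> a \<le> 1 \<Longrightarrow> 0 \<le> b \<Longrightarrow> b \<le> 1 \<Longrightarrow>
       Ed (ze z) (ne z n) a - Ed (ze z) (ne z n) b + \<bar>e\<bar>/2 \<le> R"
    and hWo: "\<And>a b. 0 \<le> a \<Longrightarrow> a \<le> 1 \<Longrightarrow> 0 \<le> b \<Longrightarrow> b \<le> 1 \<Longrightarrow>
       Ed (zo z) (no z n) a - Ed (zo z) (no z n) b + \<bar>e\<bar>/2 \<le> R"
    and hC: "\<And>a b. 0 \<le> a \<Longrightarrow> a \<le> 1 \<Longrightarrow> 0 \<le> b \<Longrightarrow> b \<le> 1 \<Longrightarrow>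
       \<bar>Ed (ze z) (ne z n) a\<bar> + \<bar>Ed (zo z) (no z n) b\<bar> + \<bar>e\<bar>/2 \<le> R"
  shows "Ed z n x - Ed z n y \<le> R"
proof -
  have m1: "e * t \<le> \<bar>e\<bar>/2" if "\<bar>t\<bar> \<le> 1/2" for t
    using eps_mul[OF that, of e] by linarith
  show ?thesis
  proof (cases "x \<le> 1/2")
    case xl: True
    have ex: "Ed z n x = Ed (ze z) (ne z n) (2*x) + e * x" using Ed_low[of x z n] xl x unfolding e_def by simp
    show ?thesis
    proof (cases "y \<le> 1/2")
      case yl: True
      have ey: "Ed z n y = Ed (ze z) (ne z n) (2*y) + e * y" using Ed_low[of y z n] yl y unfolding e_def by simp
      have "e * (x - y) \<le> \<bar>e\<bar>/2" by (rule m1) (use xl yl x y in \<open>simp only: abs_le_iff, auto\<close>)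
      moreover have "Ed (ze z) (ne z n) (2*x) - Ed (ze z) (ne z n) (2*y) + \<bar>e\<bar>/2 \<le> R"
        by (rule hWe) (use xl yl x y in auto)
      ultimately show ?thesis unfolding ex ey by (simp add: algebra_simps)
    next
      case yh: False
      have ey: "Ed z n y = Ed (zo z) (no z n) (2*y-1) + e * (1-y)" using Ed_high[of y z n] yh y unfolding e_def by simp
      have "e * (x - (1-y)) \<le> \<bar>e\<bar>/2" by (rule m1) (use xl yh x y in \<open>simp only: abs_le_iff, auto\<close>)
      moreover have "\<bar>Ed (ze z) (ne z n) (2*x)\<bar> + \<bar>Ed (zo z) (no z n) (2*y-1)\<bar> + \<bar>e\<bar>/2 \<le> R"
        by (rule hC) (use xl yh x y in auto)
      moreover have "Ed (ze z) (ne z n) (2*x) - Ed (zo z) (no z n) (2*y-1) \<le> \<bar>Ed (ze z) (ne z n) (2*x)\<bar> + \<bar>Ed (zo z) (no z n) (2*y-1)\<bar>"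
        by linarith
      ultimately show ?thesis unfolding ex ey by (simp add: algebra_simps)
    qed
  next
    case xh: False
    have ex: "Ed z n x = Ed (zo z) (no z n) (2*x-1) + e * (1-x)" using Ed_high[of x z n] xh x unfolding e_def by simp
    show ?thesis
    proof (cases "y \<le> 1/2")
      case yl: True
      have ey: "Ed z n y = Ed (ze z) (ne z n) (2*y) + e * y" using Ed_low[of y z n] yl y unfolding e_def by simp
      have "e * ((1-x) - y) \<le> \<bar>e\<bar>/2" by (rule m1) (use xh yl x y in \<open>simp only: abs_le_iff, auto\<close>)
      moreover have "\<bar>Ed (ze z) (ne z n) (2*y)\<bar> + \<bar>Ed (zo z) (no z n) (2*x-1)\<bar> + \<bar>e\<bar>/2 \<le> R"
        by (rule hC) (use xh yl x y in auto)
      moreover have "Ed (zo z) (no z n) (2*x-1) - Ed (ze z) (ne z n) (2*y) \<le> \<bar>Ed (ze z) (ne z n) (2*y)\<bar> + \<bar>Ed (zo z) (no z n) (2*x-1)\<bar>"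
        by linarith
      ultimately show ?thesis unfolding ex ey by (simp add: algebra_simps)
    next
      case yh: False
      have ey: "Ed z n y = Ed (zo z) (no z n) (2*y-1) + e * (1-y)" using Ed_high[of y z n] yh y unfolding e_def by simp
      have "e * ((1-x) - (1-y)) \<le> \<bar>e\<bar>/2" by (rule m1) (use xh yh x y in \<open>simp only: abs_le_iff, auto\<close>)
      moreover have "Ed (zo z) (no z n) (2*x-1) - Ed (zo z) (no z n) (2*y-1) + \<bar>e\<bar>/2 \<le> R"
        by (rule hWo) (use xh yh x y in auto)
      ultimately show ?thesis unfolding ex ey by (simp add: algebra_simps)
    qed
  qed
qed


lemma fb_even2:
  assumes "even l" "l \<le> 2^(Suc k') + 1" "0 \<le> a" "a \<le> 1"
  shows "\<bar>Ed w l a\<bar> \<le> 1 + real k' / 2"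
proof -
  obtain j where j: "l = 2*j" using assms(1) by auto
  have "j \<le> 2^k' + 1" using assms(2) j by simp
  then show ?thesis using fb_even[of j k' a w] assms j by simp
qed

lemma log_mono2: "0 < a \<Longrightarrow> a \<le> b \<Longrightarrow> log 2 a \<le> log 2 (b::real)"
  by simp

lemma sum2_helper: "(A::real) \<le> 1 + k/2 \<Longrightarrow> B \<le> 1 + k/2 \<Longrightarrow> 2 + k \<le> R \<Longrightarrow> A + B + 0/2 \<le> R"
  by linarith

lemma sum_helper2: "(A::real) \<le> 1 + k/2 \<Longrightarrow> B \<le> 1 + (k+1)/2 \<Longrightarrow> A + B \<le> 2 + k + 1/2"
  unfolding add_divide_distrib by linarith

lemma sum_helper3: "(B::real) \<le> 1 + k/2 \<Longrightarrow> A \<le> 1 + (k+1)/2 \<Longrightarrow> A + B \<le> 2 + k + 1/2"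
  unfolding add_divide_distrib by linarith

lemma disc:
  assumes "0 \<le> x" "x \<le> 1" "0 \<le> y" "y \<le> 1"
  shows "Ed z n x - Ed z n y \<le> 3/2 * log 2 (real n + 1)"
  using assms
proof (induction n arbitrary: z x y rule: less_induct)
  case (less n)
  show ?case
  proof (cases "n \<le> 1")
    case True
    then consider "n = 0" | "n = 1" by linarith
    then show ?thesis
    proof cases
      case 1 then show ?thesis by (simp add: Ed_0)
    next
      case 2 then show ?thesis using Ed_1_diff[of x y z] less.prems by simp
    qed
  next
    case False
    let ?e = "real (ne z n) - real (no z n)"
    let ?R = "3/2 * log 2 (real n + 1)"
    have lt: "ne z n < n" "no z n < n" using halves_le2[of z n] False by linarith+
    have W: "3/2 * log 2 (real l + 1) + \<bar>?e\<bar>/2 \<le> ?R" if "l \<in> {ne z n, no z n}" for l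
    proof (cases "even n")
      case True
      then have "l = n div 2" using that halves_even[of n z] by auto
      then have lg: "log 2 (real l + 1) \<le> log 2 (real n + 1)" by (intro log_mono2) auto
      have e0: "\<bar>?e\<bar> = 0" using eps_even[OF True, of z] by simp
      have "3/2 * log 2 (real l + 1) \<le> 3/2 * log 2 (real n + 1)" using lg by simp
      then show ?thesis unfolding e0 by simp
    next
      case odd: False
      define m where "m = n div 2"
      have n: "n = 2*m+1" using odd unfolding m_def by simp
      have m1: "m \<ge> 1" using False n by simp
      have "l \<le> m + 1" using that halves_le[of z n] unfolding m_def by auto
      then have lg: "log 2 (real l + 1) \<le> log 2 (real m + 2)" by (intro log_mono2) auto
      have st: "3/2 * log 2 (real m + 2) + 1/2 \<le> 3/2 * log 2 (2 * real m + 2)"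
        by (rule log_half_step[OF m1])
      have "real n + 1 = 2 * real m + 2" using n by simp
      then have eq: "log 2 (real n + 1) = log 2 (2 * real m + 2)" by (simp only:)
      show ?thesis unfolding eps_odd[OF odd, of z] using lg st eq by linarith
    qed
    have C: "\<bar>Ed (ze z) (ne z n) a\<bar> + \<bar>Ed (zo z) (no z n) b\<bar> + \<bar>?e\<bar>/2 \<le> ?R"
      if ab: "0 \<le> a" "a \<le> 1" "0 \<le> b" "b \<le> 1" for a b
    proof (cases "even n")
      case True
      define m where "m = n div 2"
      have n: "n = 2*m" using True unfolding m_def by simp
      have hm: "ne z n = m" "no z n = m" using halves_even[OF True, of z] unfolding m_def by auto
      have m1: "m \<ge> 1" using False n by simp
      have e0: "\<bar>?e\<bar> = 0" using eps_even[OF True, of z] by simp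
      show ?thesis
      proof (cases "m \<le> 2")
        case True
        have "\<bar>Ed (ze z) (ne z n) a\<bar> \<le> 1 + real 0 / 2"
          by (rule fb) (use hm True ab in auto)
        moreover have "\<bar>Ed (zo z) (no z n) b\<bar> \<le> 1 + real 0 / 2"
          by (rule fb) (use hm True ab in auto)
        moreover have "2 + real 0 \<le> ?R"
        proof (rule log_ineq1)
          have "(3::real) \<le> real n + 1" using n m1 by simp
          then have "(3::real)^3 \<le> (real n + 1)^3" by (rule power_mono) auto
          then show "(2::real) ^ (2 * 0 + 4) \<le> (real n + 1) ^ 3" by simp
        qed simp
        ultimately show ?thesis using e0 by simp
      next
        case m3: False
        have "m - 1 \<ge> 2" using m3 by simp
        then obtain k' where k: "m - 1 \<le> 2^(Suc k')" "2^k' < m - 1" using exists_k[of "m-1"] by blast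
        have "\<bar>Ed (ze z) (ne z n) a\<bar> \<le> 1 + real (Suc k') / 2"
          by (rule fb) (use hm k ab in auto)
        moreover have "\<bar>Ed (zo z) (no z n) b\<bar> \<le> 1 + real (Suc k') / 2"
          by (rule fb) (use hm k ab in auto)
        moreover have "2 + real (Suc k') \<le> ?R"
        proof (rule log_ineq1)
          have "(2::real)^(Suc k') + 4 \<le> real n + 1"
          proof -
            have "2^(Suc k') + 4 \<le> n + 1" using k n m3 by simp
            then have "real (2^(Suc k') + 4) \<le> real (n + 1)" by (simp only: of_nat_le_iff)
            then show ?thesis by simp
          qed
          then show "(2::real) ^ (2 * Suc k' + 4) \<le> (real n + 1) ^ 3" by (rule pow_ineq)
        qed simp
        ultimately show ?thesis unfolding e0 by (rule sum2_helper)
      qed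
    next
      case odd: False
      define m where "m = n div 2"
      have n: "n = 2*m+1" using odd unfolding m_def by simp
      have m1: "m \<ge> 1" using False n by simp
      have e1: "\<bar>?e\<bar> = 1" using eps_odd[OF odd, of z] by simp
      have hm: "(ne z n = m + 1 \<and> no z n = m) \<or> (ne z n = m \<and> no z n = m + 1)"
        using odd unfolding m_def by (cases z n rule: ne_no_cases) auto
      show ?thesis
      proof (cases "m = 1")
        case True
        have "\<bar>Ed (ze z) (ne z n) a\<bar> \<le> 1 + real 0 / 2"
          by (rule fb) (use hm True ab in auto)
        moreover have "\<bar>Ed (zo z) (no z n) b\<bar> \<le> 1 + real 0 / 2"
          by (rule fb) (use hm True ab in auto)
        moreover have "log 2 (real n + 1) = 2"
        proof -
          have "real n + 1 = 2^2" using n True by simp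
          then have "log 2 (real n + 1) = log 2 ((2::real)^2)" by (simp only:)
          also have "\<dots> = 2" by (subst log_pow_cancel) auto
          finally show ?thesis .
        qed
        ultimately show ?thesis using e1 by simp
      next
        case m2: False
        have "m \<ge> 2" using m2 m1 by simp
        then obtain k' where k: "m \<le> 2^(Suc k')" "2^k' < m" using exists_k[of "m"] by blast
        have b1: "\<bar>Ed (ze z) (ne z n) a\<bar> \<le> 1 + real (Suc k') / 2"
          by (rule fb) (use hm k ab in auto)
        have b2: "\<bar>Ed (zo z) (no z n) b\<bar> \<le> 1 + real (Suc k') / 2"
          by (rule fb) (use hm k ab in auto)
        have "\<bar>Ed (ze z) (ne z n) a\<bar> + \<bar>Ed (zo z) (no z n) b\<bar> \<le> 2 + real k' + 1/2"
        proof (cases "even (ne z n)")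
          case True
          have "\<bar>Ed (ze z) (ne z n) a\<bar> \<le> 1 + real k' / 2"
            by (rule fb_even2) (use True hm k ab in auto)
          then show ?thesis by (rule sum_helper2) (use b2 in \<open>simp add: add.commute\<close>)
        next
          case False
          then have "even (no z n)" using hm by auto
          then have "\<bar>Ed (zo z) (no z n) b\<bar> \<le> 1 + real k' / 2"
            by (rule fb_even2) (use hm k ab in auto)
          then show ?thesis by (rule sum_helper3) (use b1 in \<open>simp add: add.commute\<close>)
        qed
        moreover have "2 + real (Suc k') \<le> ?R"
        proof (rule log_ineq1)
          have "(2::real)^(Suc k') + 4 \<le> real n + 1"
          proof -
            have "2^(Suc k') + 4 \<le> n + 1" using k n by simp
            then have "real (2^(Suc k') + 4) \<le> real (n + 1)" by (simp only: of_nat_le_iff)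
            then show ?thesis by simp
          qed
          then show "(2::real) ^ (2 * Suc k' + 4) \<le> (real n + 1) ^ 3" by (rule pow_ineq)
        qed simp
        ultimately show ?thesis using e1 by simp
      qed
    qed
    show ?thesis
    proof (rule split_bound[where R = ?R])
      fix a b :: real assume ab: "0 \<le> a" "a \<le> 1" "0 \<le> b" "b \<le> 1"
      show "Ed (ze z) (ne z n) a - Ed (ze z) (ne z n) b + \<bar>?e\<bar>/2 \<le> ?R"
        using less.IH[OF lt(1), of a b "ze z", OF ab] W[of "ne z n"] by simp
      show "Ed (zo z) (no z n) a - Ed (zo z) (no z n) b + \<bar>?e\<bar>/2 \<le> ?R"
        using less.IH[OF lt(2), of a b "zo z", OF ab] W[of "no z n"] by simp
      show "\<bar>Ed (ze z) (ne z n) a\<bar> + \<bar>Ed (zo z) (no z n) b\<bar> + \<bar>?e\<bar>/2 \<le> ?R"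
        by (rule C[OF ab])
    qed (use less.prems in auto)
  qed
qed



definition cc :: "('v::finite \<Rightarrow> 'v \<Rightarrow> real) \<Rightarrow> ('v \<Rightarrow> 'v list) \<Rightarrow> 'v \<Rightarrow> nat \<Rightarrow> real" where
  "cc P ord v k = (\<Sum>x\<leftarrow>take k (ord v). P v x)"

locale rt =
  fixes P :: "'v::finite \<Rightarrow> 'v \<Rightarrow> real" and ord :: "'v \<Rightarrow> 'v list" and v :: 'v
  assumes st: "stochastic P"
    and dist: "distinct (ord v)"
    and setord: "set (ord v) = nbhd P v"
begin

abbreviation "xs \<equiv> ord v"
abbreviation "c \<equiv> cc P ord v"

lemma P_zero: "u \<notin> set xs \<Longrightarrow> P v u = 0"
proof -
  assume "u \<notin> set xs"
  then have "\<not> P v u > 0" using setord by (auto simp: nbhd_def)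
  moreover have "P v u \<ge> 0" using st by (simp add: stochastic_def)
  ultimately show "P v u = 0" by linarith
qed

lemma c0: "c 0 = 0" by (simp add: cc_def)

lemma c_Suc: "k < length xs \<Longrightarrow> c (Suc k) = c k + P v (xs ! k)"
  by (simp add: cc_def take_Suc_conv_app_nth)

lemma pos: "k < length xs \<Longrightarrow> P v (xs ! k) > 0"
  using setord nth_mem[of k xs] by (auto simp: nbhd_def)

lemma c_len: "c (length xs) = 1"
proof -
  have "c (length xs) = (\<Sum>u\<in>set xs. P v u)"
    by (simp add: cc_def sum_list_distinct_conv_sum_set[OF dist])
  also have "\<dots> = (\<Sum>u\<in>UNIV. P v u)"
  proof (rule sum.mono_neutral_left)
    show "\<forall>i\<in>UNIV - set xs. P v i = 0"
      using P_zero by auto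
  qed auto
  also have "\<dots> = 1" using st by (simp add: stochastic_def)
  finally show ?thesis .
qed

lemma c_mono: "k \<le> k' \<Longrightarrow> c k \<le> c k'"
proof (induction k' rule: dec_induct)
  case base then show ?case by simp
next
  case (step k')
  show ?case
  proof (cases "k' < length xs")
    case True then show ?thesis using step c_Suc[of k'] pos[of k'] by simp
  next
    case False then show ?thesis using step by (simp add: cc_def)
  qed
qed

lemma c_nonneg: "c k \<ge> 0" using c_mono[of 0 k] c0 by simp

lemma c_le1: "c k \<le> 1"
proof (cases "k \<le> length xs")
  case True then show ?thesis using c_mono[OF True] c_len by simp
next
  case False then show ?thesis using c_len by (simp add: cc_def)
qed

lemma len_pos: "length xs > 0"
  using c_len c0 by (cases "length xs") auto

lemma c_strict: "k < k' \<Longrightarrow> k < length xs \<Longrightarrow> c (Suc k) \<le> c k'"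
  using c_mono[of "Suc k" k'] by simp

lemma uniq:
  assumes "k1 < length xs" "k2 < length xs"
    "c k1 \<le> x" "x < c (Suc k1)" "c k2 \<le> x" "x < c (Suc k2)"
  shows "k1 = k2"
proof (rule ccontr)
  assume "k1 \<noteq> k2"
  then consider "k1 < k2" | "k2 < k1" by linarith
  then show False
  proof cases
    case 1 then show False using c_strict[OF 1 assms(1)] assms by linarith
  next
    case 2 then show False using c_strict[OF 2 assms(2)] assms by linarith
  qed
qed

lemma exist:
  assumes "0 \<le> x" "x < 1"
  shows "\<exists>k<length xs. c k \<le> x \<and> x < c (Suc k)"
proof -
  define k0 where "k0 = (LEAST k. x < c (Suc k))"
  have ex: "x < c (Suc (length xs - 1))" using assms c_len len_pos by simp
  have k0a: "x < c (Suc k0)" unfolding k0_def by (rule LeastI[of "\<lambda>k. x < c (Suc k)", OF ex])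
  have k0b: "k0 \<le> length xs - 1" unfolding k0_def by (rule Least_le[of "\<lambda>k. x < c (Suc k)", OF ex])
  have "c k0 \<le> x"
  proof (cases k0)
    case 0 then show ?thesis using c0 assms by simp
  next
    case (Suc k1)
    have "\<not> x < c (Suc k1)" using not_less_Least[of k1 "\<lambda>k. x < c (Suc k)"] Suc unfolding k0_def by simp
    then show ?thesis using Suc by simp
  qed
  moreover have "k0 < length xs" using k0b len_pos by linarith
  ultimately show ?thesis using k0a by blast
qed

lemma router_char:
  assumes "k < length xs"
  shows "router P ord v j = xs ! k \<longleftrightarrow> c k \<le> vdc j \<and> vdc j < c (Suc k)"
proof -
  let ?x = "vdc j"
  obtain k0 where k0: "k0 < length xs" "c k0 \<le> ?x" "?x < c (Suc k0)"
    using exist[OF vdc_nonneg vdc_lt1] by blast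
  have r: "router P ord v j = xs ! k0"
    unfolding router_def
  proof (rule the_equality)
    show "\<exists>k<length xs. xs ! k0 = xs ! k \<and> (\<Sum>x\<leftarrow>take k xs. P v x) \<le> ?x \<and> ?x < (\<Sum>x\<leftarrow>take (Suc k) xs. P v x)"
      using k0 by (auto simp: cc_def)
  next
    fix u assume "\<exists>k<length xs. u = xs ! k \<and> (\<Sum>x\<leftarrow>take k xs. P v x) \<le> ?x \<and> ?x < (\<Sum>x\<leftarrow>take (Suc k) xs. P v x)"
    then obtain k where "k < length xs" "u = xs ! k" "c k \<le> ?x" "?x < c (Suc k)"
      by (auto simp: cc_def)
    moreover have "k = k0" using uniq[OF \<open>k < length xs\<close> k0(1) \<open>c k \<le> ?x\<close> \<open>?x < c (Suc k)\<close> k0(2) k0(3)] .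
    ultimately show "u = xs ! k0" by simp
  qed
  show ?thesis
  proof
    assume "router P ord v j = xs ! k"
    then have "k0 = k" using r k0(1) assms dist by (simp add: nth_eq_iff_index_eq)
    then show "c k \<le> ?x \<and> ?x < c (Suc k)" using k0 by simp
  next
    assume "c k \<le> ?x \<and> ?x < c (Suc k)"
    then have "k0 = k" using uniq[OF k0(1) assms] k0 by simp
    then show "router P ord v j = xs ! k" using r by simp
  qed
qed

lemma router_in: "router P ord v j \<in> set xs"
proof -
  obtain k0 where k0: "k0 < length xs" "c k0 \<le> vdc j" "vdc j < c (Suc k0)"
    using exist[OF vdc_nonneg vdc_lt1] by blast
  then have "router P ord v j = xs ! k0" using router_char by blast
  then show ?thesis using k0 by simp
qed

lemma icount_nb:
  assumes "k < length xs"
  shows "real (Icount P ord v (xs ! k) z (z + n)) - real n * P v (xs ! k)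
         = Ed z n (c (Suc k)) - Ed z n (c k)"
proof -
  have A: "{j \<in> {z..<z+n}. router P ord v j = xs ! k}
        = {j \<in> {z..<z+n}. vdc j < c (Suc k)} - {j \<in> {z..<z+n}. vdc j < c k}"
  proof (rule set_eqI)
    fix j
    show "j \<in> {j \<in> {z..<z+n}. router P ord v j = xs ! k} \<longleftrightarrow>
      j \<in> {j \<in> {z..<z+n}. vdc j < c (Suc k)} - {j \<in> {z..<z+n}. vdc j < c k}"
      using router_char[OF assms, of j] by auto
  qed
  have sub: "{j \<in> {z..<z+n}. vdc j < c k} \<subseteq> {j \<in> {z..<z+n}. vdc j < c (Suc k)}"
    using c_mono[of k "Suc k"] by auto
  have "Icount P ord v (xs ! k) z (z + n) = cnt z n (c (Suc k)) - cnt z n (c k)"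
    unfolding Icount_def cnt_def A by (rule card_Diff_subset) (use sub in auto)
  moreover have "cnt z n (c k) \<le> cnt z n (c (Suc k))"
    unfolding cnt_def by (rule card_mono) (use sub in auto)
  ultimately have e1: "real (Icount P ord v (xs ! k) z (z + n)) = real (cnt z n (c (Suc k))) - real (cnt z n (c k))"
    by simp
  have e2: "P v (xs ! k) = c (Suc k) - c k" using c_Suc[OF assms] by simp
  show ?thesis unfolding Ed_def e1 e2 by (simp add: algebra_simps)
qed

lemma icount_err:
  "\<bar>real (Icount P ord v u z (z + n)) - real n * P v u\<bar> \<le> 3/2 * log 2 (real n + 1)"
proof (cases "u \<in> set xs")
  case True
  then obtain k where k: "k < length xs" "u = xs ! k" by (auto simp: in_set_conv_nth)
  have "Ed z n (c (Suc k)) - Ed z n (c k) \<le> 3/2 * log 2 (real n + 1)"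
    by (rule disc) (auto simp: c_nonneg c_le1)
  moreover have "Ed z n (c k) - Ed z n (c (Suc k)) \<le> 3/2 * log 2 (real n + 1)"
    by (rule disc) (auto simp: c_nonneg c_le1)
  ultimately show ?thesis unfolding k(2) icount_nb[OF k(1), of z n] abs_le_iff by (intro conjI) linarith+
next
  case False
  then have "Icount P ord v u z (z + n) = 0" using router_in unfolding Icount_def by auto
  moreover have "P v u = 0" using False by (rule P_zero)
  moreover have "log 2 (real n + 1) \<ge> 0" by simp
  ultimately show ?thesis by simp
qed

lemma icount_zero: "P v u = 0 \<Longrightarrow> Icount P ord v u z z' = 0"
proof -
  assume "P v u = 0"
  then have "u \<notin> set xs" using setord by (auto simp: nbhd_def)
  then show ?thesis using router_in unfolding Icount_def by auto
qed

end



lemma stochastic_mpow: "stochastic P \<Longrightarrow> stochastic (mpow P t)"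
  by (simp add: stochastic_def mpow_nonneg mpow_rowsum)

lemma l1_contract:
  fixes a :: "'v::finite \<Rightarrow> real"
  assumes "stochastic Q"
  shows "(\<Sum>u\<in>UNIV. \<bar>\<Sum>y\<in>UNIV. a y * Q y u\<bar>) \<le> (\<Sum>y\<in>UNIV. \<bar>a y\<bar>)"
proof -
  have "(\<Sum>u\<in>UNIV. \<bar>\<Sum>y\<in>UNIV. a y * Q y u\<bar>) \<le> (\<Sum>u\<in>UNIV. \<Sum>y\<in>UNIV. \<bar>a y\<bar> * Q y u)"
  proof (rule sum_mono)
    fix u
    have "\<bar>\<Sum>y\<in>UNIV. a y * Q y u\<bar> \<le> (\<Sum>y\<in>UNIV. \<bar>a y * Q y u\<bar>)" by (rule sum_abs)
    also have "\<dots> = (\<Sum>y\<in>UNIV. \<bar>a y\<bar> * Q y u)"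
      using assms by (simp add: abs_mult stochastic_def)
    finally show "\<bar>\<Sum>y\<in>UNIV. a y * Q y u\<bar> \<le> (\<Sum>y\<in>UNIV. \<bar>a y\<bar> * Q y u)" .
  qed
  also have "\<dots> = (\<Sum>y\<in>UNIV. \<bar>a y\<bar> * (\<Sum>u\<in>UNIV. Q y u))"
    by (subst sum.swap) (simp add: sum_distrib_left)
  also have "\<dots> = (\<Sum>y\<in>UNIV. \<bar>a y\<bar>)" using assms by (simp add: stochastic_def)
  finally show ?thesis .
qed

lemma dTV_step:
  fixes a b :: "'v::finite \<Rightarrow> real"
  assumes "stochastic Q"
  shows "dTV (\<lambda>u. \<Sum>y\<in>UNIV. a y * Q y u) (\<lambda>u. \<Sum>y\<in>UNIV. b y * Q y u) \<le> dTV a b"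
proof -
  have "(\<Sum>u\<in>UNIV. \<bar>(\<Sum>y\<in>UNIV. a y * Q y u) - (\<Sum>y\<in>UNIV. b y * Q y u)\<bar>)
      = (\<Sum>u\<in>UNIV. \<bar>\<Sum>y\<in>UNIV. (a y - b y) * Q y u\<bar>)"
    by (simp add: sum_subtractf left_diff_distrib)
  also have "\<dots> \<le> (\<Sum>y\<in>UNIV. \<bar>a y - b y\<bar>)" by (rule l1_contract[OF assms])
  finally show ?thesis unfolding dTV_def by simp
qed

definition ds :: "('v::finite \<Rightarrow> 'v \<Rightarrow> real) \<Rightarrow> ('v \<Rightarrow> real) \<Rightarrow> nat \<Rightarrow> 'v \<Rightarrow> real" where
  "ds P \<pi> t x = dTV (mpow P t x) \<pi>"

definition dbar :: "('v::finite \<Rightarrow> 'v \<Rightarrow> real) \<Rightarrow> nat \<Rightarrow> real" where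
  "dbar P t = Max ((\<lambda>(x,y). dTV (mpow P t x) (mpow P t y)) ` UNIV)"

lemma dTV_le_dbar: "dTV (mpow P t x) (mpow P t y) \<le> dbar P t"
  unfolding dbar_def by (rule Max_ge) auto

lemma dbar_attained: "\<exists>x y. dbar P t = dTV (mpow P t x) (mpow P t y)"
proof -
  have "dbar P t \<in> (\<lambda>(x,y). dTV (mpow P t x) (mpow P t y)) ` UNIV"
    unfolding dbar_def by (rule Max_in) auto
  then show ?thesis by auto
qed

lemma dTV_nonneg: "dTV a b \<ge> 0"
  unfolding dTV_def by (auto intro!: sum_nonneg)

lemma dTV_sym: "dTV a b = dTV b a"
  unfolding dTV_def by (simp add: abs_minus_commute)

lemma dTV_tri: "dTV a c \<le> dTV a b + dTV b c"
proof -
  have "(\<Sum>u\<in>UNIV. \<bar>a u - c u\<bar>) \<le> (\<Sum>u\<in>UNIV. \<bar>a u - b u\<bar> + \<bar>b u - c u\<bar>)"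
    by (rule sum_mono) linarith
  then show ?thesis unfolding dTV_def by (simp add: sum.distrib)
qed

lemma dTV_le1:
  assumes "\<forall>u. a u \<ge> 0" "\<forall>u. b u \<ge> 0" "(\<Sum>u\<in>UNIV. a u) = 1" "(\<Sum>u\<in>UNIV. b u) = 1"
  shows "dTV a b \<le> 1"
proof -
  have "(\<Sum>u\<in>UNIV. \<bar>a u - b u\<bar>) \<le> (\<Sum>u\<in>UNIV. a u + b u)"
    by (rule sum_mono) (use assms in \<open>auto simp: abs_le_iff\<close>)
  then show ?thesis using assms unfolding dTV_def by (simp add: sum.distrib)
qed

context
  fixes P :: "'v::finite \<Rightarrow> 'v \<Rightarrow> real"
  assumes st: "stochastic P"
begin

lemma dbar_nonneg: "dbar P t \<ge> 0"
  using dTV_le_dbar[of P t] dTV_nonneg by (meson order_trans)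

lemma dbar_le1: "dbar P t \<le> 1"
proof -
  obtain x y where "dbar P t = dTV (mpow P t x) (mpow P t y)" using dbar_attained by blast
  also have "\<dots> \<le> 1" by (rule dTV_le1) (use st in \<open>auto simp: mpow_nonneg mpow_rowsum\<close>)
  finally show ?thesis .
qed

lemma mpow_Suc_fun: "mpow P (Suc t) x = (\<lambda>u. \<Sum>y\<in>UNIV. mpow P t x y * P y u)"
  by simp

lemma dbar_Suc: "dbar P (Suc t) \<le> dbar P t"
proof -
  obtain x y where "dbar P (Suc t) = dTV (mpow P (Suc t) x) (mpow P (Suc t) y)" using dbar_attained by blast
  also have "\<dots> \<le> dTV (mpow P t x) (mpow P t y)"
    unfolding mpow_Suc_fun by (rule dTV_step[OF st])
  also have "\<dots> \<le> dbar P t" by (rule dTV_le_dbar)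
  finally show ?thesis .
qed

lemma dbar_mono: "s \<le> t \<Longrightarrow> dbar P t \<le> dbar P s"
proof (induction t rule: dec_induct)
  case base then show ?case by simp
next
  case (step t) then show ?case using dbar_Suc[of t] by linarith
qed

lemma ds_Suc:
  assumes "stationary P \<pi>"
  shows "ds P \<pi> (Suc t) x \<le> ds P \<pi> t x"
proof -
  have pi: "\<pi> = (\<lambda>u. \<Sum>y\<in>UNIV. \<pi> y * P y u)" using assms by (auto simp: stationary_def)
  have "ds P \<pi> (Suc t) x = dTV (\<lambda>u. \<Sum>y\<in>UNIV. mpow P t x y * P y u) (\<lambda>u. \<Sum>y\<in>UNIV. \<pi> y * P y u)"
    unfolding ds_def mpow_Suc_fun by (subst pi) (rule refl)
  also have "\<dots> \<le> ds P \<pi> t x" unfolding ds_def by (rule dTV_step[OF st])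
  finally show ?thesis .
qed

lemma ds_mono:
  assumes "stationary P \<pi>" "s \<le> t"
  shows "ds P \<pi> t x \<le> ds P \<pi> s x"
  using assms(2)
proof (induction t rule: dec_induct)
  case base then show ?case by simp
next
  case (step t) then show ?case using ds_Suc[OF assms(1), of t x] by linarith
qed

lemma ds_le_dbar:
  assumes "stationary P \<pi>"
  shows "ds P \<pi> t w \<le> dbar P t"
proof -
  have pis: "(\<Sum>y\<in>UNIV. \<pi> y) = 1" and pin: "\<forall>y. \<pi> y \<ge> 0" using assms by (auto simp: stationary_def)
  have "(\<Sum>u\<in>UNIV. \<bar>mpow P t w u - \<pi> u\<bar>) = (\<Sum>u\<in>UNIV. \<bar>\<Sum>y\<in>UNIV. \<pi> y * (mpow P t w u - mpow P t y u)\<bar>)"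
  proof (rule sum.cong)
    fix u
    have "(\<Sum>y\<in>UNIV. \<pi> y * (mpow P t w u - mpow P t y u)) = (\<Sum>y\<in>UNIV. \<pi> y) * mpow P t w u - (\<Sum>y\<in>UNIV. \<pi> y * mpow P t y u)"
      by (simp add: right_diff_distrib sum_subtractf sum_distrib_right)
    also have "\<dots> = mpow P t w u - \<pi> u" using pis stationary_pow[OF assms, of t u] by simp
    finally show "\<bar>mpow P t w u - \<pi> u\<bar> = \<bar>\<Sum>y\<in>UNIV. \<pi> y * (mpow P t w u - mpow P t y u)\<bar>" by simp
  qed simp
  also have "\<dots> \<le> (\<Sum>u\<in>UNIV. \<Sum>y\<in>UNIV. \<pi> y * \<bar>mpow P t w u - mpow P t y u\<bar>)"
  proof (rule sum_mono)
    fix u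
    have "\<bar>\<Sum>y\<in>UNIV. \<pi> y * (mpow P t w u - mpow P t y u)\<bar> \<le> (\<Sum>y\<in>UNIV. \<bar>\<pi> y * (mpow P t w u - mpow P t y u)\<bar>)"
      by (rule sum_abs)
    also have "\<dots> = (\<Sum>y\<in>UNIV. \<pi> y * \<bar>mpow P t w u - mpow P t y u\<bar>)" using pin by (simp add: abs_mult)
    finally show "\<bar>\<Sum>y\<in>UNIV. \<pi> y * (mpow P t w u - mpow P t y u)\<bar> \<le> (\<Sum>y\<in>UNIV. \<pi> y * \<bar>mpow P t w u - mpow P t y u\<bar>)" .
  qed
  also have "\<dots> = (\<Sum>y\<in>UNIV. \<pi> y * (\<Sum>u\<in>UNIV. \<bar>mpow P t w u - mpow P t y u\<bar>))"
    by (subst sum.swap) (simp add: sum_distrib_left)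
  also have "\<dots> \<le> (\<Sum>y\<in>UNIV. \<pi> y * (2 * dbar P t))"
  proof (rule sum_mono)
    fix y
    have "(\<Sum>u\<in>UNIV. \<bar>mpow P t w u - mpow P t y u\<bar>) \<le> 2 * dbar P t"
      using dTV_le_dbar[of P t w y] unfolding dTV_def by simp
    then show "\<pi> y * (\<Sum>u\<in>UNIV. \<bar>mpow P t w u - mpow P t y u\<bar>) \<le> \<pi> y * (2 * dbar P t)"
      using pin by (simp add: mult_left_mono)
  qed
  also have "\<dots> = 2 * dbar P t" using pis by (simp add: sum_distrib_right[symmetric])
  finally show ?thesis unfolding ds_def dTV_def by simp
qed


lemma l1_diff_bound:
  fixes a :: "'v::finite \<Rightarrow> real" and Q :: "'v \<Rightarrow> 'v \<Rightarrow> real"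
  assumes sa: "(\<Sum>z\<in>UNIV. a z) = 0"
    and hQ: "\<And>z z'. (\<Sum>u\<in>UNIV. \<bar>Q z u - Q z' u\<bar>) \<le> 2*\<delta>"
  shows "(\<Sum>u\<in>UNIV. \<bar>\<Sum>z\<in>UNIV. a z * Q z u\<bar>) \<le> \<delta> * (\<Sum>z\<in>UNIV. \<bar>a z\<bar>)"
proof -
  define p where "p z = max (a z) 0" for z
  define m where "m z = max (- a z) 0" for z
  have am: "a z = p z - m z" for z unfolding p_def m_def by simp
  have aabs: "\<bar>a z\<bar> = p z + m z" for z unfolding p_def m_def by simp
  have p0: "p z \<ge> 0" "m z \<ge> 0" for z unfolding p_def m_def by simp_all
  define S where "S = (\<Sum>z\<in>UNIV. p z)"
  have Sm: "(\<Sum>z\<in>UNIV. m z) = S"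
  proof -
    have "(\<Sum>z\<in>UNIV. p z) - (\<Sum>z\<in>UNIV. m z) = 0" using sa by (simp add: am sum_subtractf)
    then show ?thesis unfolding S_def by simp
  qed
  have absS: "(\<Sum>z\<in>UNIV. \<bar>a z\<bar>) = 2 * S" using Sm by (simp add: aabs sum.distrib S_def)
  have d0: "\<delta> \<ge> 0" using hQ[of z z for z] by simp
  show ?thesis
  proof (cases "S = 0")
    case True
    then have "\<forall>z\<in>UNIV. p z = 0" unfolding S_def using p0 by (subst sum_nonneg_eq_0_iff[symmetric]) auto
    moreover have "\<forall>z\<in>UNIV. m z = 0" using True Sm p0 by (subst sum_nonneg_eq_0_iff[symmetric]) auto
    ultimately have "\<forall>z. a z = 0" using am by simp
    then show ?thesis by simp
  next
    case False
    then have Spos: "S > 0" using p0 unfolding S_def by (simp add: sum_nonneg less_le)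
    have key: "(\<Sum>z\<in>UNIV. a z * Q z u) = (\<Sum>z\<in>UNIV. \<Sum>z'\<in>UNIV. p z * m z' * (Q z u - Q z' u)) / S" for u
    proof -
      have "(\<Sum>z\<in>UNIV. \<Sum>z'\<in>UNIV. p z * m z' * (Q z u - Q z' u))
          = (\<Sum>z\<in>UNIV. \<Sum>z'\<in>UNIV. p z * m z' * Q z u) - (\<Sum>z\<in>UNIV. \<Sum>z'\<in>UNIV. p z * m z' * Q z' u)"
        by (simp add: right_diff_distrib sum_subtractf)
      also have "(\<Sum>z\<in>UNIV. \<Sum>z'\<in>UNIV. p z * m z' * Q z u) = S * (\<Sum>z\<in>UNIV. p z * Q z u)"
      proof -
        have "(\<Sum>z\<in>UNIV. \<Sum>z'\<in>UNIV. p z * m z' * Q z u) = (\<Sum>z\<in>UNIV. \<Sum>z'\<in>UNIV. (p z * Q z u) * m z')"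
          by (intro sum.cong refl) (simp add: ac_simps)
        also have "\<dots> = (\<Sum>z\<in>UNIV. p z * Q z u) * (\<Sum>z'\<in>UNIV. m z')"
          by (rule sum_product[symmetric])
        finally show ?thesis using Sm by (simp add: mult.commute)
      qed
      also have "(\<Sum>z\<in>UNIV. \<Sum>z'\<in>UNIV. p z * m z' * Q z' u) = S * (\<Sum>z'\<in>UNIV. m z' * Q z' u)"
      proof -
        have "(\<Sum>z\<in>UNIV. \<Sum>z'\<in>UNIV. p z * m z' * Q z' u) = (\<Sum>z\<in>UNIV. p z * (\<Sum>z'\<in>UNIV. m z' * Q z' u))"
          by (simp add: sum_distrib_left mult.assoc)
        also have "\<dots> = S * (\<Sum>z'\<in>UNIV. m z' * Q z' u)" by (simp add: S_def sum_distrib_right)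
        finally show ?thesis .
      qed
      also have "S * (\<Sum>z\<in>UNIV. p z * Q z u) - S * (\<Sum>z'\<in>UNIV. m z' * Q z' u) = S * (\<Sum>z\<in>UNIV. a z * Q z u)"
        by (simp add: am left_diff_distrib sum_subtractf right_diff_distrib)
      finally show ?thesis using Spos by simp
    qed
    have "(\<Sum>u\<in>UNIV. \<bar>\<Sum>z\<in>UNIV. a z * Q z u\<bar>)
        \<le> (\<Sum>u\<in>UNIV. (\<Sum>z\<in>UNIV. \<Sum>z'\<in>UNIV. p z * m z' * \<bar>Q z u - Q z' u\<bar>) / S)"
    proof (rule sum_mono)
      fix u
      have "\<bar>\<Sum>z\<in>UNIV. \<Sum>z'\<in>UNIV. p z * m z' * (Q z u - Q z' u)\<bar> \<le> (\<Sum>z\<in>UNIV. \<bar>\<Sum>z'\<in>UNIV. p z * m z' * (Q z u - Q z' u)\<bar>)"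
        by (rule sum_abs)
      also have "\<dots> \<le> (\<Sum>z\<in>UNIV. \<Sum>z'\<in>UNIV. \<bar>p z * m z' * (Q z u - Q z' u)\<bar>)"
        by (rule sum_mono) (rule sum_abs)
      also have "\<dots> = (\<Sum>z\<in>UNIV. \<Sum>z'\<in>UNIV. p z * m z' * \<bar>Q z u - Q z' u\<bar>)"
        using p0 by (simp add: abs_mult)
      finally show "\<bar>\<Sum>z\<in>UNIV. a z * Q z u\<bar> \<le> (\<Sum>z\<in>UNIV. \<Sum>z'\<in>UNIV. p z * m z' * \<bar>Q z u - Q z' u\<bar>) / S"
        unfolding key using Spos by (simp add: divide_right_mono)
    qed
    also have "\<dots> = (\<Sum>z\<in>UNIV. \<Sum>z'\<in>UNIV. p z * m z' * (\<Sum>u\<in>UNIV. \<bar>Q z u - Q z' u\<bar>)) / S"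
    proof -
      have "(\<Sum>u\<in>UNIV. (\<Sum>z\<in>UNIV. \<Sum>z'\<in>UNIV. p z * m z' * \<bar>Q z u - Q z' u\<bar>) / S)
          = (\<Sum>u\<in>UNIV. \<Sum>z\<in>UNIV. \<Sum>z'\<in>UNIV. p z * m z' * \<bar>Q z u - Q z' u\<bar>) / S"
        by (rule sum_divide_distrib[symmetric])
      also have "(\<Sum>u\<in>UNIV. \<Sum>z\<in>UNIV. \<Sum>z'\<in>UNIV. p z * m z' * \<bar>Q z u - Q z' u\<bar>)
          = (\<Sum>z\<in>UNIV. \<Sum>u\<in>UNIV. \<Sum>z'\<in>UNIV. p z * m z' * \<bar>Q z u - Q z' u\<bar>)"
        by (rule sum.swap)
      also have "\<dots> = (\<Sum>z\<in>UNIV. \<Sum>z'\<in>UNIV. \<Sum>u\<in>UNIV. p z * m z' * \<bar>Q z u - Q z' u\<bar>)"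
        by (rule sum.cong[OF refl], rule sum.swap)
      also have "\<dots> = (\<Sum>z\<in>UNIV. \<Sum>z'\<in>UNIV. p z * m z' * (\<Sum>u\<in>UNIV. \<bar>Q z u - Q z' u\<bar>))"
        by (rule sum.cong[OF refl], rule sum.cong[OF refl], rule sum_distrib_left[symmetric])
      finally show ?thesis .
    qed
    also have "\<dots> \<le> (\<Sum>z\<in>UNIV. \<Sum>z'\<in>UNIV. p z * m z' * (2*\<delta>)) / S"
      using Spos by (intro divide_right_mono sum_mono mult_left_mono hQ) (auto intro: mult_nonneg_nonneg p0)
    also have "\<dots> = 2 * \<delta> * S"
    proof -
      have "(\<Sum>z\<in>UNIV. \<Sum>z'\<in>UNIV. p z * m z' * (2*\<delta>)) = S * S * (2*\<delta>)"
      proof -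
        have "(\<Sum>z\<in>UNIV. \<Sum>z'\<in>UNIV. p z * m z' * (2*\<delta>)) = (\<Sum>z\<in>UNIV. \<Sum>z'\<in>UNIV. p z * m z') * (2*\<delta>)"
          by (simp add: sum_distrib_right)
        also have "(\<Sum>z\<in>UNIV. \<Sum>z'\<in>UNIV. p z * m z') = S * S"
          unfolding sum_product[symmetric] S_def using Sm S_def by simp
        finally show ?thesis .
      qed
      then show ?thesis using Spos by simp
    qed
    also have "\<dots> = \<delta> * (\<Sum>z\<in>UNIV. \<bar>a z\<bar>)" using absS by simp
    finally show ?thesis .
  qed
qed

lemma dbar_add: "dbar P (s + t) \<le> dbar P s * dbar P t"
proof -
  obtain x y where xy: "dbar P (s+t) = dTV (mpow P (s+t) x) (mpow P (s+t) y)" using dbar_attained by blast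
  define a where "a z = mpow P s x z - mpow P s y z" for z
  have sa: "(\<Sum>z\<in>UNIV. a z) = 0" using st unfolding a_def by (simp add: sum_subtractf mpow_rowsum)
  have eq: "mpow P (s+t) x u - mpow P (s+t) y u = (\<Sum>z\<in>UNIV. a z * mpow P t z u)" for u
    unfolding a_def mpow_add by (simp add: sum_subtractf left_diff_distrib)
  have hQ: "(\<Sum>u\<in>UNIV. \<bar>mpow P t z u - mpow P t z' u\<bar>) \<le> 2 * dbar P t" for z z'
    using dTV_le_dbar[of P t z z'] unfolding dTV_def by simp
  have "(\<Sum>u\<in>UNIV. \<bar>mpow P (s+t) x u - mpow P (s+t) y u\<bar>) \<le> dbar P t * (\<Sum>z\<in>UNIV. \<bar>a z\<bar>)"
    unfolding eq by (rule l1_diff_bound[OF sa hQ])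
  also have "(\<Sum>z\<in>UNIV. \<bar>a z\<bar>) \<le> 2 * dbar P s"
    using dTV_le_dbar[of P s x y] unfolding dTV_def a_def by simp
  finally have "(\<Sum>u\<in>UNIV. \<bar>mpow P (s+t) x u - mpow P (s+t) y u\<bar>) \<le> dbar P t * (2 * dbar P s)"
    using dbar_nonneg[of t] by (meson mult_left_mono order_trans)
  then show ?thesis unfolding xy dTV_def by (simp add: ac_simps)
qed

lemma dbar_pow: "dbar P (k * t) \<le> dbar P t ^ k"
proof (induction k)
  case 0 then show ?case using dbar_le1[of 0] by simp
next
  case (Suc k)
  have "dbar P (Suc k * t) = dbar P (k * t + t)" by (simp add: add.commute)
  also have "\<dots> \<le> dbar P (k*t) * dbar P t" by (rule dbar_add)
  also have "\<dots> \<le> dbar P t ^ k * dbar P t" using Suc dbar_nonneg[of t] by (rule mult_right_mono)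
  finally show ?case by (simp add: mult.commute)
qed

end



section \<open>Additive semigroups of naturals\<close>

locale addsg =
  fixes S :: "nat set"
  assumes cl: "\<And>a b. a \<in> S \<Longrightarrow> b \<in> S \<Longrightarrow> a + b \<in> S"
begin

definition S0 where "S0 = insert 0 S"

lemma S0_add: "a \<in> S0 \<Longrightarrow> b \<in> S0 \<Longrightarrow> a + b \<in> S0"
  unfolding S0_def using cl by auto

lemma S0_mult: "a \<in> S0 \<Longrightarrow> k * a \<in> S0"
proof (induction k)
  case 0 then show ?case by (simp add: S0_def)
next
  case (Suc k) then show ?case using S0_add[of a "k*a"] by simp
qed

lemma S0_sum: "finite F \<Longrightarrow> F \<subseteq> S \<Longrightarrow> (\<Sum>f\<in>F. c f * f) \<in> S0"
proof (induction F rule: finite_induct)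
  case empty then show ?case by (simp add: S0_def)
next
  case (insert x F)
  have "x \<in> S0" using insert by (simp add: S0_def)
  then have "c x * x \<in> S0" by (rule S0_mult)
  then show ?case using insert S0_add by simp
qed

lemma S0_pos: "a \<in> S0 \<Longrightarrow> a > 0 \<Longrightarrow> a \<in> S"
  unfolding S0_def by auto

lemma consec:
  assumes "b \<in> S" "b + 1 \<in> S" "b \<ge> 1"
  shows "\<forall>n\<ge>b*b. n \<in> S"
proof (intro allI impI)
  fix n assume n: "n \<ge> b*b"
  define q where "q = n div b"
  define r where "r = n mod b"
  have nq: "n = q*b + r" unfolding q_def r_def by simp
  have rb: "r < b" unfolding r_def using assms(3) by simp
  have qb: "q \<ge> b"
  proof (rule ccontr)
    assume "\<not> q \<ge> b"
    then have "q + 1 \<le> b" by simp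
    then have "(q+1)*b \<le> b*b" by (rule mult_le_mono1)
    then show False using n nq rb by (simp add: algebra_simps)
  qed
  have "n = (q - r) * b + r * (b+1)" using nq qb rb by (simp add: algebra_simps diff_mult_distrib)
  moreover have "(q - r) * b \<in> S0" by (rule S0_mult) (use assms in \<open>simp add: S0_def\<close>)
  moreover have "r * (b+1) \<in> S0" by (rule S0_mult) (use assms in \<open>simp add: S0_def\<close>)
  ultimately have "n \<in> S0" using S0_add by simp
  moreover have "n > 0" using n assms(3) by (metis le_trans less_one mult_eq_0_iff nat_less_le not_le)
  ultimately show "n \<in> S" by (rule S0_pos)
qed

end

lemma bezout_set:
  fixes F :: "nat set"
  assumes "finite F"
  shows "\<exists>c. (\<Sum>f\<in>F. c f * int f) = int (Gcd F)"
  using assms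
proof (induction F rule: finite_induct)
  case empty then show ?case by simp
next
  case (insert x F)
  obtain c where c: "(\<Sum>f\<in>F. c f * int f) = int (Gcd F)" using insert by blast
  obtain u v where uv: "u * int x + v * int (Gcd F) = gcd (int x) (int (Gcd F))" using bezout_int by blast
  define c' where "c' f = (if f = x then u else v * c f)" for f
  have "(\<Sum>f\<in>insert x F. c' f * int f) = u * int x + (\<Sum>f\<in>F. v * c f * int f)"
    using insert by (simp add: c'_def) (rule sum.cong, auto)
  also have "(\<Sum>f\<in>F. v * c f * int f) = v * int (Gcd F)" using c by (simp add: sum_distrib_left[symmetric] mult.assoc)
  finally show ?case using uv by auto
qed

lemma Gcd_sub_dvd: "A \<subseteq> B \<Longrightarrow> Gcd B dvd Gcd (A::nat set)"
  by (rule Gcd_greatest) (auto intro: Gcd_dvd)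

lemma finite_Gcd1:
  fixes S :: "nat set"
  assumes "Gcd S = 1"
  shows "\<exists>n. Gcd (S \<inter> {..n}) = 1"
proof -
  obtain a where a: "a \<in> S" "a \<noteq> 0" using assms Gcd_0_iff[of S] by auto
  define g where "g n = Gcd (S \<inter> {..n})" for n
  have gpos: "g n > 0" if "n \<ge> a" for n
  proof -
    have "a \<in> S \<inter> {..n}" using a that by auto
    then have "\<not> (S \<inter> {..n} \<subseteq> {0})" using a by auto
    then show ?thesis unfolding g_def using Gcd_0_iff[of "S \<inter> {..n}"] by auto
  qed
  define v0 where "v0 = (LEAST v. \<exists>n\<ge>a. g n = v)"
  have "\<exists>n\<ge>a. g n = v0" unfolding v0_def by (rule LeastI[of _ "g a"]) auto
  then obtain n0 where n0: "n0 \<ge> a" "g n0 = v0" by blast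
  have "v0 dvd s" if s: "s \<in> S" for s
  proof -
    define n1 where "n1 = max n0 s"
    have "g n1 dvd g n0" unfolding g_def n1_def by (rule Gcd_sub_dvd) auto
    moreover have "g n1 \<ge> v0" unfolding v0_def by (rule Least_le, rule exI[of _ n1]) (use n0 in \<open>auto simp: n1_def\<close>)
    moreover have "g n0 > 0" using gpos n0(1) by blast
    ultimately have "g n1 = v0" using n0 by (metis dvd_imp_le le_antisym)
    moreover have "g n1 dvd s" unfolding g_def n1_def by (rule Gcd_dvd) (use s in auto)
    ultimately show ?thesis by simp
  qed
  then have "v0 dvd Gcd S" by (rule Gcd_greatest)
  then have "v0 = 1" using assms by simp
  then show ?thesis using n0 unfolding g_def by blast
qed

lemma semigroup_eventually:
  fixes S :: "nat set"
  assumes cl: "\<And>a b. a \<in> S \<Longrightarrow> b \<in> S \<Longrightarrow> a + b \<in> S" and g: "Gcd S = 1"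
  shows "\<exists>N. \<forall>n\<ge>N. n \<in> S"
proof -
  interpret addsg S by (standard) (rule cl)
  obtain n where n: "Gcd (S \<inter> {..n}) = 1" using finite_Gcd1[OF g] by blast
  define F where "F = S \<inter> {..n}"
  have fin: "finite F" "F \<subseteq> S" unfolding F_def by auto
  obtain c where c: "(\<Sum>f\<in>F. c f * int f) = 1" using bezout_set[OF fin(1)] n unfolding F_def by auto
  define A where "A = (\<Sum>f\<in>F. nat (max (c f) 0) * f)"
  define B where "B = (\<Sum>f\<in>F. nat (max (- c f) 0) * f)"
  have "int A - int B = (\<Sum>f\<in>F. c f * int f)"
  proof -
    have "int A - int B = (\<Sum>f\<in>F. (int (nat (max (c f) 0)) - int (nat (max (- c f) 0))) * int f)"
      unfolding A_def B_def by (simp add: sum_subtractf left_diff_distrib)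
    also have "\<dots> = (\<Sum>f\<in>F. c f * int f)" by (rule sum.cong) auto
    finally show ?thesis .
  qed
  then have AB: "A = B + 1" using c by simp
  have AS0: "A \<in> S0" unfolding A_def by (rule S0_sum[OF fin])
  have BS0: "B \<in> S0" unfolding B_def by (rule S0_sum[OF fin])
  have AS: "A \<in> S" using AS0 AB S0_pos by simp
  show ?thesis
  proof (cases "B = 0")
    case True
    then have "1 \<in> S" using AS AB by simp
    have "n \<in> S" if "n \<ge> 1" for n
    proof -
      have "n * 1 \<in> S0" by (rule S0_mult) (use \<open>1 \<in> S\<close> in \<open>simp add: S0_def\<close>)
      then show ?thesis using S0_pos[of n] that by simp
    qed
    then have "\<forall>n\<ge>1. n \<in> S" by blast
    then show ?thesis by blast
  next
    case False
    then have "B \<in> S" using BS0 S0_pos by simp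
    then have "\<forall>n\<ge>B*B. n \<in> S" using consec[of B] AS AB False by simp
    then show ?thesis by blast
  qed
qed


section \<open>Ergodic chains mix\<close>

lemma aperiodic_eventually:
  assumes erg: "ergodic P"
  shows "\<exists>N. \<forall>n\<ge>N. mpow P n v v > 0"
proof -
  have st: "stochastic P" using erg by (simp add: ergodic_def)
  define S where "S = {t. t > 0 \<and> mpow P t v v > 0}"
  have cl: "a + b \<in> S" if "a \<in> S" "b \<in> S" for a b
  proof -
    have "mpow P (a + b) v v \<ge> mpow P a v v * mpow P b v v" by (rule mpow_ge[OF st])
    moreover have "mpow P a v v * mpow P b v v > 0" using that by (simp add: S_def)
    ultimately have "mpow P (a + b) v v > 0" by linarith
    then show ?thesis using that by (simp add: S_def)
  qed
  have g: "Gcd S = 1" using erg by (simp add: ergodic_def aperiodic_chain_def S_def)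
  obtain N where "\<forall>n\<ge>N. n \<in> S" using semigroup_eventually[OF cl g] by blast
  then show ?thesis by (auto simp: S_def)
qed

lemma primitive:
  fixes P :: "'v::finite \<Rightarrow> 'v \<Rightarrow> real"
  assumes erg: "ergodic P"
  shows "\<exists>t0. \<forall>x y. mpow P t0 x y > 0"
proof -
  have st: "stochastic P" using erg by (simp add: ergodic_def)
  have "\<forall>x. \<exists>N. \<forall>n\<ge>N. mpow P n x x > 0" using aperiodic_eventually[OF erg] by blast
  then obtain Nf where Nf0: "\<forall>x. \<forall>n\<ge>Nf x. mpow P n x x > 0" by (rule choice[THEN exE])
  have Nf: "\<And>x n. n \<ge> Nf x \<Longrightarrow> mpow P n x x > 0" using Nf0 by blast
  have "\<forall>p. \<exists>t. mpow P t (fst p) (snd p) > 0" using erg by (auto simp: ergodic_def irreducible_chain_def)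
  then obtain f where f0: "\<forall>p. mpow P (f p) (fst p) (snd p) > 0" by (rule choice[THEN exE])
  have f: "\<And>p. mpow P (f p) (fst p) (snd p) > 0" using f0 by blast
  define N where "N = Max (range Nf)"
  define T where "T = Max (range f)"
  have "mpow P (N + T) x y > 0" for x y
  proof -
    have fT: "f (x,y) \<le> T" unfolding T_def by (rule Max_ge) auto
    have NN: "Nf x \<le> N" unfolding N_def by (rule Max_ge) auto
    have eq: "N + T = (N + T - f (x,y)) + f (x,y)" using fT by simp
    have "mpow P (N + T - f (x,y)) x x > 0" by (rule Nf) (use fT NN in simp)
    moreover have "mpow P (f (x,y)) x y > 0" using f[of "(x,y)"] by simp
    ultimately have "mpow P (N + T - f (x,y)) x x * mpow P (f (x,y)) x y > 0" by simp
    also have "\<dots> \<le> mpow P (N + T - f (x,y) + f (x,y)) x y" by (rule mpow_ge[OF st])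
    finally show ?thesis using eq by simp
  qed
  then show ?thesis by blast
qed

lemma dTV_lt1_pos:
  fixes a b :: "'v::finite \<Rightarrow> real"
  assumes "\<forall>u. a u > 0" "\<forall>u. b u > 0" "(\<Sum>u\<in>UNIV. a u) = 1" "(\<Sum>u\<in>UNIV. b u) = 1"
  shows "dTV a b < 1"
proof -
  have e: "\<bar>a u - b u\<bar> = a u + b u - 2 * min (a u) (b u)" for u by (simp add: min_def abs_if)
  have "(\<Sum>u\<in>UNIV. \<bar>a u - b u\<bar>) = 2 - 2 * (\<Sum>u\<in>UNIV. min (a u) (b u))"
    using assms by (simp add: e sum_subtractf sum.distrib sum_distrib_left)
  moreover have "(\<Sum>u\<in>UNIV. min (a u) (b u)) > 0" by (rule sum_pos) (use assms in auto)
  ultimately show ?thesis unfolding dTV_def by simp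
qed

context
  fixes P :: "'v::finite \<Rightarrow> 'v \<Rightarrow> real" and \<pi> :: "'v \<Rightarrow> real"
  assumes erg: "ergodic P" and sta: "stationary P \<pi>"
begin

lemma st: "stochastic P" using erg by (simp add: ergodic_def)

lemma converge: "\<exists>t. dTV (mpow P t x) \<pi> \<le> 1/4"
proof -
  obtain t0 where t0: "\<And>x y. mpow P t0 x y > 0" using primitive[OF erg] by blast
  define q where "q = dbar P t0"
  obtain x0 y0 where q: "q = dTV (mpow P t0 x0) (mpow P t0 y0)" using dbar_attained unfolding q_def by blast
  have q1: "q < 1" unfolding q by (rule dTV_lt1_pos) (use t0 st in \<open>auto simp: mpow_rowsum\<close>)
  have q0: "q \<ge> 0" unfolding q_def by (rule dbar_nonneg[OF st])
  have "(\<lambda>k. q^k) \<longlonglongrightarrow> 0" by (rule LIMSEQ_power_zero) (use q0 q1 in simp)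
  then have "eventually (\<lambda>k. q^k < 1/4) sequentially" by (rule order_tendstoD) simp
  then obtain N where N: "q^N < 1/4" unfolding eventually_sequentially by blast
  have "ds P \<pi> (N * t0) x \<le> dbar P (N * t0)" by (rule ds_le_dbar[OF st sta])
  also have "\<dots> \<le> q^N" unfolding q_def by (rule dbar_pow[OF st])
  finally have "dTV (mpow P (N * t0) x) \<pi> \<le> 1/4" using N unfolding ds_def by simp
  then show ?thesis by blast
qed

definition "rate = mixing_rate P \<pi>"

lemma rate_ds: "ds P \<pi> rate x \<le> 1/4"
proof -
  define L where "L = (LEAST t. dTV (mpow P t x) \<pi> \<le> 1/4)"
  have L1: "dTV (mpow P L x) \<pi> \<le> 1/4" unfolding L_def by (rule LeastI_ex) (rule converge)
  have L2: "L \<le> rate" unfolding rate_def mixing_rate_def mixing_time_def L_def by (rule Max_ge) auto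
  have "ds P \<pi> rate x \<le> ds P \<pi> L x" by (rule ds_mono[OF st sta L2])
  then show ?thesis using L1 unfolding ds_def by simp
qed

lemma rate_dbar: "dbar P rate \<le> 1/2"
proof -
  obtain x y where xy: "dbar P rate = dTV (mpow P rate x) (mpow P rate y)" using dbar_attained by blast
  also have "\<dots> \<le> dTV (mpow P rate x) \<pi> + dTV \<pi> (mpow P rate y)" by (rule dTV_tri)
  also have "\<dots> \<le> 1/2" using rate_ds[of x] rate_ds[of y] unfolding ds_def by (simp add: dTV_sym)
  finally show ?thesis .
qed

lemma ds_geo: "k * rate \<le> s \<Longrightarrow> ds P \<pi> s w \<le> (1/2)^k"
proof -
  assume ks: "k * rate \<le> s"
  have "ds P \<pi> s w \<le> dbar P s" by (rule ds_le_dbar[OF st sta])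
  also have "\<dots> \<le> dbar P (k * rate)" by (rule dbar_mono[OF st ks])
  also have "\<dots> \<le> dbar P rate ^ k" by (rule dbar_pow[OF st])
  also have "\<dots> \<le> (1/2)^k" by (rule power_mono[OF rate_dbar dbar_nonneg[OF st]])
  finally show ?thesis .
qed

lemma ds_nonneg: "ds P \<pi> s w \<ge> 0" unfolding ds_def by (rule dTV_nonneg)

lemma geo_sum:
  assumes "(r::nat) \<ge> 1"
  shows "(\<Sum>s<T. (1/2::real)^(s div r)) \<le> 2 * real r"
proof -
  have "(\<Sum>s<T. (1/2::real)^(s div r)) \<le> (\<Sum>s<T * r. (1/2::real)^(s div r))"
    by (rule sum_mono2) (use assms in auto)
  also have "\<dots> = (\<Sum>m<T. \<Sum>s\<in>{m*r..<m*r+r}. (1/2::real)^(s div r))"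
    by (rule sum.nat_group[symmetric])
  also have "\<dots> = (\<Sum>m<T. real r * (1/2)^m)"
  proof (rule sum.cong[OF refl])
    fix m
    have "(\<Sum>s\<in>{m*r..<m*r+r}. (1/2::real)^(s div r)) = (\<Sum>s\<in>{m*r..<m*r+r}. (1/2::real)^m)"
    proof (rule sum.cong[OF refl])
      fix s assume "s \<in> {m*r..<m*r+r}"
      then have "s div r = m" using assms by (auto intro: div_nat_eqI simp: algebra_simps)
      then show "(1/2::real)^(s div r) = (1/2)^m" by simp
    qed
    then show "(\<Sum>s\<in>{m*r..<m*r+r}. (1/2::real)^(s div r)) = real r * (1/2)^m" by simp
  qed
  also have "\<dots> = real r * (\<Sum>m<T. (1/2::real)^m)" by (simp add: sum_distrib_left)
  also have "\<dots> \<le> real r * 2"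
  proof -
    have "(\<Sum>m<T. (1/2::real)^m) = 2 - 2 * (1/2)^T" by (induction T) auto
    then show ?thesis by (simp add: mult_left_mono)
  qed
  finally show ?thesis by simp
qed

lemma ds_sum: "(\<Sum>s<T. ds P \<pi> s w) \<le> 2 * real rate"
proof (cases "rate = 0")
  case True
  have d0: "dbar P 0 \<le> 1/2" using rate_dbar True by simp
  have dd: "dbar P 0 \<le> dbar P 0 * dbar P 0" using dbar_add[OF st, of 0 0] by simp
  have dn: "dbar P 0 \<ge> 0" by (rule dbar_nonneg[OF st])
  have "dbar P 0 * dbar P 0 \<le> dbar P 0 * (1/2)" by (rule mult_left_mono[OF d0 dn])
  then have "dbar P 0 = 0" using dd dn by linarith
  then have "ds P \<pi> s w \<le> 0" for s
    using ds_le_dbar[OF st sta, of s w] dbar_mono[OF st, of 0 s] by simp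
  then have "(\<Sum>s<T. ds P \<pi> s w) \<le> 0" by (simp add: sum_nonpos)
  then show ?thesis using True by simp
next
  case False
  have "(\<Sum>s<T. ds P \<pi> s w) \<le> (\<Sum>s<T. (1/2::real)^(s div rate))"
    by (rule sum_mono) (rule ds_geo, simp)
  also have "\<dots> \<le> 2 * real rate" by (rule geo_sum) (use False in simp)
  finally show ?thesis .
qed

end



lemma fiber_sum:
  fixes f :: "nat \<Rightarrow> 'v::finite"
  assumes "finite A"
  shows "(\<Sum>u\<in>UNIV. card {j\<in>A. f j = u}) = card A"
proof -
  have "(\<Sum>u\<in>UNIV. card {j\<in>A. f j = u}) = (\<Sum>u\<in>UNIV. \<Sum>j\<in>A. if f j = u then 1 else 0)"
    using assms by (simp add: sum.inter_filter[symmetric])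
  also have "\<dots> = (\<Sum>j\<in>A. \<Sum>u\<in>UNIV. if f j = u then 1 else 0)" by (rule sum.swap)
  also have "\<dots> = (\<Sum>j\<in>A. 1)" by simp
  finally show ?thesis by simp
qed

lemma icount_sum: "(\<Sum>u\<in>UNIV. Icount P ord v u z (z + n)) = n"
  unfolding Icount_def by (subst fiber_sum) auto

definition Cs where "Cs P ord chi0 t = snd (qr_state P ord chi0 t)"

lemma qr_chi_Suc:
  "qr_chi P ord chi0 (Suc t) u = (\<Sum>v\<in>UNIV. Icount P ord v u (Cs P ord chi0 t v) (Cs P ord chi0 t v + qr_chi P ord chi0 t v))"
  by (simp add: qr_chi_def Cs_def Let_def case_prod_beta)

lemma qr_chi_0: "qr_chi P ord chi0 0 = chi0"
  by (simp add: qr_chi_def)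

lemma chi_sum: "(\<Sum>v\<in>UNIV. qr_chi P ord chi0 t v) = (\<Sum>v\<in>UNIV. chi0 v)"
proof (induction t)
  case 0 then show ?case by (simp add: qr_chi_0)
next
  case (Suc t)
  have "(\<Sum>u\<in>UNIV. qr_chi P ord chi0 (Suc t) u)
      = (\<Sum>v\<in>UNIV. \<Sum>u\<in>UNIV. Icount P ord v u (Cs P ord chi0 t v) (Cs P ord chi0 t v + qr_chi P ord chi0 t v))"
    unfolding qr_chi_Suc by (rule sum.swap)
  also have "\<dots> = (\<Sum>v\<in>UNIV. qr_chi P ord chi0 t v)" by (simp add: icount_sum)
  finally show ?case using Suc by simp
qed

lemma chi_le: "qr_chi P ord chi0 t v \<le> (\<Sum>v\<in>UNIV. chi0 v)"
  using member_le_sum[of v UNIV "qr_chi P ord chi0 t"] chi_sum[of P ord chi0 t] by simp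


definition err where
  "err P ord chi0 t v u = real (Icount P ord v u (Cs P ord chi0 t v) (Cs P ord chi0 t v + qr_chi P ord chi0 t v))
     - real (qr_chi P ord chi0 t v) * P v u"

context
  fixes P :: "'v::finite \<Rightarrow> 'v \<Rightarrow> real"
    and \<pi> :: "'v \<Rightarrow> real"
    and ord :: "'v \<Rightarrow> 'v list"
    and chi0 :: "'v \<Rightarrow> nat"
    and M :: nat
  assumes erg: "ergodic P"
    and sta: "stationary P \<pi>"
    and rev: "reversible P \<pi>"
    and dist: "\<And>v. distinct (ord v)"
    and setord: "\<And>v. set (ord v) = nbhd P v"
    and Msum: "(\<Sum>v\<in>UNIV. chi0 v) = M"
begin

lemma stP: "stochastic P" using erg by (simp add: ergodic_def)

lemma rtv: "rt P ord v" by standard (auto simp: stP dist setord)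

abbreviation "E t u \<equiv> (\<Sum>v\<in>UNIV. err P ord chi0 t v u)"

lemma err_bound: "\<bar>err P ord chi0 t v u\<bar> \<le> 3/2 * log 2 (real M + 1)"
proof -
  interpret rt P ord v by (rule rtv)
  have "\<bar>err P ord chi0 t v u\<bar> \<le> 3/2 * log 2 (real (qr_chi P ord chi0 t v) + 1)"
    unfolding err_def by (rule icount_err)
  also have "\<dots> \<le> 3/2 * log 2 (real M + 1)"
  proof -
    have "qr_chi P ord chi0 t v \<le> M" using chi_le[of P ord chi0 t v] Msum by simp
    then have "log 2 (real (qr_chi P ord chi0 t v) + 1) \<le> log 2 (real M + 1)" by simp
    then show ?thesis by simp
  qed
  finally show ?thesis .
qed

lemma err_zero: "P v u = 0 \<Longrightarrow> err P ord chi0 t v u = 0"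
proof -
  assume h: "P v u = 0"
  interpret rt P ord v by (rule rtv)
  show ?thesis unfolding err_def using icount_zero[OF h] h by simp
qed

lemma err_rowsum: "(\<Sum>u\<in>UNIV. err P ord chi0 t v u) = 0"
proof -
  have "(\<Sum>u\<in>UNIV. err P ord chi0 t v u)
     = real (\<Sum>u\<in>UNIV. Icount P ord v u (Cs P ord chi0 t v) (Cs P ord chi0 t v + qr_chi P ord chi0 t v))
       - real (qr_chi P ord chi0 t v) * (\<Sum>u\<in>UNIV. P v u)"
    unfolding err_def by (simp add: sum_subtractf sum_distrib_left)
  also have "\<dots> = 0" using stP by (simp add: icount_sum stochastic_def)
  finally show ?thesis .
qed

lemma chi_step: "real (qr_chi P ord chi0 (Suc t) u) = (\<Sum>v\<in>UNIV. real (qr_chi P ord chi0 t v) * P v u) + E t u"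
  unfolding qr_chi_Suc err_def by (simp add: sum_subtractf)

lemma tele:
  "real (qr_chi P ord chi0 T w) = qr_mu P chi0 T w + (\<Sum>t<T. \<Sum>u\<in>UNIV. E t u * mpow P (T - Suc t) u w)"
proof (induction T arbitrary: w)
  case 0
  have "qr_mu P chi0 0 w = real (chi0 w)"
    unfolding qr_mu_def by (simp add: if_distrib[of "\<lambda>x. real (chi0 _) * x"] cong: if_cong)
  then show ?case by (simp add: qr_chi_0)
next
  case (Suc T)
  have A: "(\<Sum>v\<in>UNIV. qr_mu P chi0 T v * P v w) = qr_mu P chi0 (Suc T) w"
  proof -
    have "(\<Sum>v\<in>UNIV. qr_mu P chi0 T v * P v w) = (\<Sum>v\<in>UNIV. \<Sum>x\<in>UNIV. real (chi0 x) * mpow P T x v * P v w)"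
      unfolding qr_mu_def by (simp add: sum_distrib_right)
    also have "\<dots> = (\<Sum>x\<in>UNIV. \<Sum>v\<in>UNIV. real (chi0 x) * mpow P T x v * P v w)" by (rule sum.swap)
    also have "\<dots> = (\<Sum>x\<in>UNIV. real (chi0 x) * (\<Sum>v\<in>UNIV. mpow P T x v * P v w))"
      by (simp add: sum_distrib_left mult.assoc)
    also have "\<dots> = qr_mu P chi0 (Suc T) w" unfolding qr_mu_def by simp
    finally show ?thesis .
  qed
  have B: "(\<Sum>v\<in>UNIV. (\<Sum>t<T. \<Sum>u\<in>UNIV. E t u * mpow P (T - Suc t) u v) * P v w)
      = (\<Sum>t<T. \<Sum>u\<in>UNIV. E t u * mpow P (Suc T - Suc t) u w)"
  proof -
    have "(\<Sum>v\<in>UNIV. (\<Sum>t<T. \<Sum>u\<in>UNIV. E t u * mpow P (T - Suc t) u v) * P v w)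
        = (\<Sum>v\<in>UNIV. \<Sum>t<T. \<Sum>u\<in>UNIV. E t u * (mpow P (T - Suc t) u v * P v w))"
      by (simp add: sum_distrib_right mult.assoc)
    also have "\<dots> = (\<Sum>t<T. \<Sum>v\<in>UNIV. \<Sum>u\<in>UNIV. E t u * (mpow P (T - Suc t) u v * P v w))"
      by (rule sum.swap)
    also have "\<dots> = (\<Sum>t<T. \<Sum>u\<in>UNIV. \<Sum>v\<in>UNIV. E t u * (mpow P (T - Suc t) u v * P v w))"
      by (rule sum.cong[OF refl], rule sum.swap)
    also have "\<dots> = (\<Sum>t<T. \<Sum>u\<in>UNIV. E t u * mpow P (Suc (T - Suc t)) u w)"
      by (rule sum.cong[OF refl], rule sum.cong[OF refl]) (simp add: sum_distrib_left)
    also have "\<dots> = (\<Sum>t<T. \<Sum>u\<in>UNIV. E t u * mpow P (Suc T - Suc t) u w)"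
      by (rule sum.cong[OF refl]) (simp add: Suc_diff_Suc)
    finally show ?thesis .
  qed
  have C: "E T w = (\<Sum>u\<in>UNIV. E T u * mpow P (Suc T - Suc T) u w)"
    by (simp add: if_distrib[of "\<lambda>x. E T _ * x"] cong: if_cong)
  have "real (qr_chi P ord chi0 (Suc T) w) = (\<Sum>v\<in>UNIV. real (qr_chi P ord chi0 T v) * P v w) + E T w"
    by (rule chi_step)
  also have "\<dots> = (\<Sum>v\<in>UNIV. (qr_mu P chi0 T v + (\<Sum>t<T. \<Sum>u\<in>UNIV. E t u * mpow P (T - Suc t) u v)) * P v w) + E T w"
    using Suc.IH by simp
  also have "\<dots> = qr_mu P chi0 (Suc T) w + (\<Sum>t<T. \<Sum>u\<in>UNIV. E t u * mpow P (Suc T - Suc t) u w) + E T w"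
    by (simp add: distrib_right sum.distrib A B)
  also have "\<dots> = qr_mu P chi0 (Suc T) w + (\<Sum>t<Suc T. \<Sum>u\<in>UNIV. E t u * mpow P (Suc T - Suc t) u w)"
    using C by simp
  finally show ?case .
qed


lemma pipos: "\<pi> v > 0" by (rule pi_pos[OF erg sta])

lemma pimin_pos: "pi_min \<pi> > 0"
proof -
  have "pi_min \<pi> \<in> range \<pi>" unfolding pi_min_def by (rule Min_in) auto
  then show ?thesis using pipos by auto
qed

lemma pimin_le: "pi_min \<pi> \<le> \<pi> u"
  unfolding pi_min_def by (rule Min_le) auto

lemma indeg: "card {v. P v u > 0} \<le> max_degree P"
proof -
  have "{v. P v u > 0} = nbhd P u"
  proof -
    have "P v u > 0 \<longleftrightarrow> P u v > 0" for v
    proof -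
      have e: "\<pi> v * P v u = \<pi> u * P u v" using rev by (simp add: reversible_def)
      have "P v u > 0 \<longleftrightarrow> \<pi> v * P v u > 0" using pipos[of v] by (simp add: zero_less_mult_iff)
      also have "\<dots> \<longleftrightarrow> \<pi> u * P u v > 0" using e by simp
      also have "\<dots> \<longleftrightarrow> P u v > 0" using pipos[of u] by (simp add: zero_less_mult_iff)
      finally show ?thesis .
    qed
    then show ?thesis by (auto simp: nbhd_def)
  qed
  moreover have "card (nbhd P u) \<le> max_degree P" unfolding max_degree_def by (rule Max_ge) auto
  ultimately show ?thesis by simp
qed

lemma g_bound: "(\<Sum>u\<in>UNIV. \<bar>mpow P s u w - \<pi> w\<bar>) \<le> \<pi> w / pi_min \<pi> * (2 * ds P \<pi> s w)"
proof -
  have "(\<Sum>u\<in>UNIV. \<bar>mpow P s u w - \<pi> w\<bar>) \<le> (\<Sum>u\<in>UNIV. \<pi> w / pi_min \<pi> * \<bar>mpow P s w u - \<pi> u\<bar>)"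
  proof (rule sum_mono)
    fix u
    have e: "\<pi> u * mpow P s u w = \<pi> w * mpow P s w u" by (rule reversible_pow[OF rev])
    have "mpow P s u w - \<pi> w = \<pi> w / \<pi> u * (mpow P s w u - \<pi> u)"
      using e pipos[of u] by (simp add: field_simps)
    then have "\<bar>mpow P s u w - \<pi> w\<bar> = \<pi> w / \<pi> u * \<bar>mpow P s w u - \<pi> u\<bar>"
      using pipos[of u] pipos[of w] by (simp add: abs_mult)
    also have "\<dots> \<le> \<pi> w / pi_min \<pi> * \<bar>mpow P s w u - \<pi> u\<bar>"
      by (rule mult_right_mono, rule divide_left_mono) (use pimin_le pimin_pos pipos in \<open>auto intro: less_imp_le\<close>)
    finally show "\<bar>mpow P s u w - \<pi> w\<bar> \<le> \<pi> w / pi_min \<pi> * \<bar>mpow P s w u - \<pi> u\<bar>" .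
  qed
  also have "\<dots> = \<pi> w / pi_min \<pi> * (\<Sum>u\<in>UNIV. \<bar>mpow P s w u - \<pi> u\<bar>)"
    by (rule sum_distrib_left[symmetric])
  also have "\<dots> = \<pi> w / pi_min \<pi> * (2 * ds P \<pi> s w)"
    by (simp add: ds_def dTV_def)
  finally show ?thesis .
qed

lemma inner_bound:
  "\<bar>\<Sum>u\<in>UNIV. E t u * mpow P s u w\<bar>
     \<le> 3/2 * log 2 (real M + 1) * real (max_degree P) * (\<pi> w / pi_min \<pi> * (2 * ds P \<pi> s w))"
proof -
  define D where "D = 3/2 * log 2 (real M + 1)"
  have D0: "D \<ge> 0" unfolding D_def by simp
  define g where "g u = mpow P s u w - \<pi> w" for u
  have "(\<Sum>u\<in>UNIV. E t u * mpow P s u w) = (\<Sum>u\<in>UNIV. E t u * g u + \<pi> w * E t u)"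
    by (rule sum.cong) (simp_all add: g_def algebra_simps)
  also have "\<dots> = (\<Sum>u\<in>UNIV. E t u * g u) + \<pi> w * (\<Sum>u\<in>UNIV. E t u)"
    by (simp add: sum.distrib sum_distrib_left)
  also have "(\<Sum>u\<in>UNIV. E t u) = 0"
    by (subst sum.swap) (simp add: err_rowsum)
  also have "(\<Sum>u\<in>UNIV. E t u * g u) = (\<Sum>u\<in>UNIV. \<Sum>v\<in>UNIV. err P ord chi0 t v u * g u)"
    by (simp add: sum_distrib_right)
  also have "\<dots> = (\<Sum>v\<in>UNIV. \<Sum>u\<in>UNIV. err P ord chi0 t v u * g u)"
    by (rule sum.swap)
  finally have eq: "(\<Sum>u\<in>UNIV. E t u * mpow P s u w) = (\<Sum>v\<in>UNIV. \<Sum>u\<in>UNIV. err P ord chi0 t v u * g u)"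
    by simp
  have "\<bar>\<Sum>v\<in>UNIV. \<Sum>u\<in>UNIV. err P ord chi0 t v u * g u\<bar> \<le> (\<Sum>v\<in>UNIV. \<Sum>u\<in>UNIV. \<bar>err P ord chi0 t v u * g u\<bar>)"
    by (rule order_trans[OF sum_abs], rule sum_mono, rule sum_abs)
  also have "\<dots> \<le> (\<Sum>v\<in>UNIV. \<Sum>u\<in>UNIV. (if P v u > 0 then D * \<bar>g u\<bar> else 0))"
  proof (rule sum_mono, rule sum_mono)
    fix v u
    show "\<bar>err P ord chi0 t v u * g u\<bar> \<le> (if P v u > 0 then D * \<bar>g u\<bar> else 0)"
    proof (cases "P v u > 0")
      case True
      have "\<bar>err P ord chi0 t v u\<bar> \<le> D" using err_bound[of t v u] unfolding D_def .
      then have "\<bar>err P ord chi0 t v u\<bar> * \<bar>g u\<bar> \<le> D * \<bar>g u\<bar>" by (rule mult_right_mono) simp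
      then show ?thesis using True by (simp add: abs_mult)
    next
      case False
      then have "P v u = 0" using stP by (simp add: stochastic_def) (meson antisym not_less)
      then show ?thesis using err_zero False by simp
    qed
  qed
  also have "\<dots> = (\<Sum>u\<in>UNIV. D * \<bar>g u\<bar> * real (card {v. P v u > 0}))"
    by (subst sum.swap) (simp add: sum.If_cases ac_simps)
  also have "\<dots> \<le> (\<Sum>u\<in>UNIV. D * \<bar>g u\<bar> * real (max_degree P))"
    by (rule sum_mono, rule mult_left_mono) (use indeg D0 in auto)
  also have "\<dots> = D * real (max_degree P) * (\<Sum>u\<in>UNIV. \<bar>g u\<bar>)"
    by (simp add: sum_distrib_left sum_distrib_right mult.commute mult.left_commute)
  also have "\<dots> \<le> D * real (max_degree P) * (\<pi> w / pi_min \<pi> * (2 * ds P \<pi> s w))"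
    unfolding g_def by (rule mult_left_mono[OF g_bound]) (use D0 in simp)
  finally show ?thesis unfolding eq D_def .
qed

lemma main_bound:
  "\<bar>real (qr_chi P ord chi0 T w) - qr_mu P chi0 T w\<bar>
     \<le> 6 * \<pi> w / pi_min \<pi> * log 2 (real M + 1) * real (mixing_rate P \<pi>) * real (max_degree P)"
proof -
  define K where "K = 3/2 * log 2 (real M + 1) * real (max_degree P) * (\<pi> w / pi_min \<pi>) * 2"
  have K0: "K \<ge> 0" unfolding K_def using pipos[of w] pimin_pos by simp
  have "\<bar>real (qr_chi P ord chi0 T w) - qr_mu P chi0 T w\<bar> = \<bar>\<Sum>t<T. \<Sum>u\<in>UNIV. E t u * mpow P (T - Suc t) u w\<bar>"
    using tele[of T w] by simp
  also have "\<dots> \<le> (\<Sum>t<T. \<bar>\<Sum>u\<in>UNIV. E t u * mpow P (T - Suc t) u w\<bar>)" by (rule sum_abs)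
  also have "\<dots> \<le> (\<Sum>t<T. K * ds P \<pi> (T - Suc t) w)"
  proof (rule sum_mono)
    fix t
    have "3/2 * log 2 (real M + 1) * real (max_degree P) * (\<pi> w / pi_min \<pi> * (2 * ds P \<pi> (T - Suc t) w))
        = K * ds P \<pi> (T - Suc t) w" unfolding K_def by (simp add: algebra_simps)
    then show "\<bar>\<Sum>u\<in>UNIV. E t u * mpow P (T - Suc t) u w\<bar> \<le> K * ds P \<pi> (T - Suc t) w"
      using inner_bound[where t=t and s="T - Suc t" and w=w] by simp
  qed
  also have "\<dots> = K * (\<Sum>s<T. ds P \<pi> s w)"
    by (simp add: sum_distrib_left[symmetric] sum.nat_diff_reindex[of "\<lambda>s. ds P \<pi> s w"])
  also have "\<dots> \<le> K * (2 * real (mixing_rate P \<pi>))"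
  proof (rule mult_left_mono[OF _ K0])
    have "(\<Sum>s<T. ds P \<pi> s w) \<le> 2 * real (rate P \<pi>)" by (rule ds_sum[OF erg sta])
    then show "(\<Sum>s<T. ds P \<pi> s w) \<le> 2 * real (mixing_rate P \<pi>)" using rate_def[OF erg sta] by simp
  qed
  also have "\<dots> = 6 * \<pi> w / pi_min \<pi> * log 2 (real M + 1) * real (mixing_rate P \<pi>) * real (max_degree P)"
    unfolding K_def by simp
  finally show ?thesis .
qed
end



theorem theorem5p7:
  fixes P :: "'v::finite \<Rightarrow> 'v \<Rightarrow> real"
    and \<pi> :: "'v \<Rightarrow> real"
    and ord :: "'v \<Rightarrow> 'v list"
    and chi0 :: "'v \<Rightarrow> nat"
    and M :: nat
  assumes "ergodic P"
    and "stationary P \<pi>"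
    and "reversible P \<pi>"
    and "\<And>v. distinct (ord v)"
    and "\<And>v. set (ord v) = nbhd P v"
    and "(\<Sum>v\<in>UNIV. chi0 v) = M"
  shows "\<forall>w T. \<bar>real (qr_chi P ord chi0 T w) - qr_mu P chi0 T w\<bar>
           \<le> 6 * \<pi> w / pi_min \<pi> * log 2 (real M + 1) * real (mixing_rate P \<pi>) * real (max_degree P)"
  proof -
  show ?thesis using main_bound[OF assms(1) assms(2) assms(3) assms(4) assms(5) assms(6)] by blast
qed

end
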